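(* Let $\mu$ be a probability measure on $\mathbb R^d$ supported on the Euclidean ball $B(0,R)$, let $X_1,\dots,X_N$ be i.i.d. from $\mu$, and $\mu_N:=\frac1N\sum_{i=1}^N\delta_{X_i}$. Fix $\sigma>0$, let $\varphi_\sigma(x)=(2\pi\sigma^2)^{-d/2}\exp(-\|x\|^2/(2\sigma^2))$, and set $p:=\mu*\varphi_\sigma$, $q_N:=\mu_N*\varphi_\sigma=\frac1N\sum_i\varphi_\sigma(\cdot-X_i)$. Then for every $N\ge1$ and $\delta\in(0,1)$, with probability at least $1-\delta$, \[\mathrm{KL}(p\|q_N)\le\frac{2^{d/2}}{N}\exp\!\Big(\frac{17}{2}\frac{R^2}{\sigma^2}\Big)\Big(1+\sqrt{2\log(1/\delta)}\Big)^2.\] In particular, for any $a>0$, with probability at least $1-N^{-a}$, $\mathrm{KL}(p\|q_N)\le\frac{2^{d/2}}{N}\exp(\frac{17}{2}\frac{R^2}{\sigma^2})(1+\sqrt{2a\log N})^2$.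
   Context: $\mathrm{KL}(p\|q)=\int p\log(p/q)$ for densities $p,q$. *)

theory Defs
  imports "HOL-Probability.Probability"
begin

definition gauss_kernel :: "real \<Rightarrow> 'a::euclidean_space \<Rightarrow> real" where
  "gauss_kernel \<sigma> x =
     (2 * pi * \<sigma>\<^sup>2) powr (- real DIM('a) / 2) * exp (- (norm x)\<^sup>2 / (2 * \<sigma>\<^sup>2))"

definition KL_div :: "('a::euclidean_space \<Rightarrow> real) \<Rightarrow> ('a \<Rightarrow> real) \<Rightarrow> ereal" where
  "KL_div p q =
     (if integrable lborel (\<lambda>x. p x * ln (p x / q x))
      then ereal (\<integral>x. p x * ln (p x / q x) \<partial>lborel) else \<infinity>)"

end

theory Submission
  imports Defs
begin


lemma gauss_1d:
  assumes s: "s > (0::real)"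
  shows "(\<integral>\<^sup>+t. ennreal (exp (- t\<^sup>2 / (2 * s\<^sup>2))) \<partial>lborel) = ennreal (sqrt (2 * pi * s\<^sup>2))"
proof -
  have "(\<integral>\<^sup>+t. ennreal (normal_density 0 s t) \<partial>lborel) = 1"
    using s by (subst nn_integral_eq_integral) (auto simp: normal_density_nonneg)
  moreover have "(\<lambda>t. ennreal (exp (- t\<^sup>2 / (2 * s\<^sup>2)))) = (\<lambda>t. ennreal (sqrt (2 * pi * s\<^sup>2)) * ennreal (normal_density 0 s t))"
    using s by (auto simp: normal_density_def ennreal_mult[symmetric] intro!: ext)
  ultimately show ?thesis by (simp add: nn_integral_cmult)
qed

lemma gauss_dd:
  assumes s: "s > (0::real)"
  shows "(\<integral>\<^sup>+x. ennreal (exp (- (norm (x::'a::euclidean_space))\<^sup>2 / (2 * s\<^sup>2))) \<partial>lborel)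
     = ennreal ((2 * pi * s\<^sup>2) powr (real DIM('a) / 2))"
proof -
  have "\<And>x::'a. ennreal (exp (- (norm x)\<^sup>2 / (2 * s\<^sup>2))) = (\<Prod>b\<in>Basis. ennreal (exp (- (x \<bullet> b)\<^sup>2 / (2 * s\<^sup>2))))"
  proof -
    fix x :: 'a
    have "(norm x)\<^sup>2 = x \<bullet> x" by (rule power2_norm_eq_inner)
    also have "\<dots> = (\<Sum>b\<in>Basis. (x \<bullet> b) * (x \<bullet> b))" by (rule euclidean_inner)
    finally have "(norm x)\<^sup>2 = (\<Sum>b\<in>Basis. (x \<bullet> b)\<^sup>2)" by (simp add: power2_eq_square)
    then have "exp (- (norm x)\<^sup>2 / (2 * s\<^sup>2)) = (\<Prod>b\<in>Basis. exp (- (x \<bullet> b)\<^sup>2 / (2 * s\<^sup>2)))"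
      by (simp add: exp_sum[symmetric] sum_negf sum_divide_distrib)
    then show "?thesis x" by (simp add: prod_ennreal)
  qed
  note pw = this
  have "(\<integral>\<^sup>+x. ennreal (exp (- (norm (x::'a))\<^sup>2 / (2 * s\<^sup>2))) \<partial>lborel)
      = (\<integral>\<^sup>+x. (\<Prod>b\<in>Basis. ennreal (exp (- ((x::'a) \<bullet> b)\<^sup>2 / (2 * s\<^sup>2)))) \<partial>lborel)"
    by (simp only: pw)
  also have "\<dots> = (\<Prod>b\<in>(Basis::'a set). (\<integral>\<^sup>+t. ennreal (exp (- t\<^sup>2 / (2 * s\<^sup>2))) \<partial>lborel))"
    by (rule nn_integral_lborel_prod[where f="\<lambda>b t. ennreal (exp (- t\<^sup>2 / (2 * s\<^sup>2)))"]) auto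
  also have "\<dots> = ennreal (sqrt (2 * pi * s\<^sup>2) ^ DIM('a))"
    using gauss_1d[OF s] by (simp add: ennreal_power)
  also have "sqrt (2 * pi * s\<^sup>2) ^ DIM('a) = (2 * pi * s\<^sup>2) powr (real DIM('a) / 2)"
  proof -
    have x: "2 * pi * s\<^sup>2 > 0" using s by simp
    have "sqrt (2 * pi * s\<^sup>2) ^ DIM('a) = ((2 * pi * s\<^sup>2) powr (1/2)) ^ DIM('a)"
      using x by (simp add: powr_half_sqrt)
    also have "\<dots> = ((2 * pi * s\<^sup>2) powr (1/2)) powr (real DIM('a))"
      by (rule powr_realpow[symmetric]) (use x s in simp)
    also have "\<dots> = (2 * pi * s\<^sup>2) powr (real DIM('a) / 2)"
      by (simp add: powr_powr)
    finally show ?thesis .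
  qed
  finally show ?thesis .
qed


lemma upd_space_PiM:
  assumes "x \<in> space (PiM I (\<lambda>_. M))" "y \<in> space M"
  shows "x(i := y) \<in> space (PiM (insert i I) (\<lambda>_. M))"
  using assms by (auto simp: space_PiM PiE_iff extensional_def)

lemma mcdiarmid_mgf:
  fixes M :: "'a measure" and I :: "'i set"
  assumes M: "prob_space M" and l: "l > 0" and c: "c \<ge> 0"
  shows "finite I \<Longrightarrow> (\<And>f B. f \<in> borel_measurable (PiM I (\<lambda>_. M)) \<Longrightarrow>
        (\<forall>x\<in>space (PiM I (\<lambda>_. M)). \<bar>f x\<bar> \<le> B) \<Longrightarrow>
        (\<forall>i\<in>I. \<forall>x\<in>space (PiM I (\<lambda>_. M)). \<forall>y\<in>space M. \<bar>f (x(i:=y)) - f x\<bar> \<le> c) \<Longrightarrow>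
        (\<integral>\<^sup>+x. ennreal (exp (l * (f x - (\<integral>x. f x \<partial>PiM I (\<lambda>_. M))))) \<partial>PiM I (\<lambda>_. M))
          \<le> ennreal (exp (l\<^sup>2 * real (card I) * c\<^sup>2 / 8)))"
proof (induction I rule: finite_induct)
  case empty
  then show ?case
    by (simp add: PiM_empty lebesgue_integral_count_space_finite nn_integral_count_space_finite)
next
  case (insert i I)
  interpret M: prob_space M by (rule M)
  interpret PP: product_prob_space "\<lambda>_::'i. M" I
    by unfold_locales
  let ?MI = "PiM I (\<lambda>_. M)" and ?MI' = "PiM (insert i I) (\<lambda>_. M)"
  interpret MI: prob_space ?MI by (rule prob_space_PiM) (simp add: M)
  interpret MI': prob_space ?MI' by (rule prob_space_PiM) (simp add: M)
  note f_meas[measurable] = insert.prems(1)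
  note bnd = insert.prems(2)
  note diff = insert.prems(3)
  have upd_meas[measurable]: "(\<lambda>(x, y). x(i := y)) \<in> measurable (?MI \<Otimes>\<^sub>M M) ?MI'"
    using measurable_fun_upd[where I="insert i I" and J=I and i=i and M="\<lambda>_. M"
        and f=fst and h=snd and N="?MI \<Otimes>\<^sub>M M"]
    by (simp add: split_beta')
  have fu_meas[measurable]: "(\<lambda>(x, y). f (x(i := y))) \<in> borel_measurable (?MI \<Otimes>\<^sub>M M)"
    using measurable_compose[OF upd_meas f_meas] by (simp add: split_beta')
  have fu_meas2: "(\<lambda>y. f (x(i := y))) \<in> borel_measurable M" if "x \<in> space ?MI" for x
    using measurable_comp[OF measurable_component_update[OF that \<open>i \<notin> I\<close>] f_meas]
    by (simp add: comp_def)
  have fu_int: "integrable M (\<lambda>y. f (x(i := y)))" if x: "x \<in> space ?MI" for x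
    using bnd upd_space_PiM[OF x] by (intro M.integrable_const_bound[where B=B] fu_meas2 x) auto
  define g where "g x = (\<integral>y. f (x(i:=y)) \<partial>M)" for x
  have g_meas[measurable]: "g \<in> borel_measurable ?MI"
    unfolding g_def using fu_meas by measurable
  have g_bnd: "\<forall>x\<in>space ?MI. \<bar>g x\<bar> \<le> B"
  proof
    fix x assume x: "x \<in> space ?MI"
    have "\<bar>g x\<bar> \<le> (\<integral>y. \<bar>f (x(i:=y))\<bar> \<partial>M)"
      unfolding g_def by (rule integral_abs_bound)
    also have "\<dots> \<le> (\<integral>y. B \<partial>M)"
      using bnd upd_space_PiM[OF x] fu_int[OF x]
      by (intro integral_mono) auto
    finally show "\<bar>g x\<bar> \<le> B" by (simp add: M.prob_space)
  qed
  have g_diff: "\<forall>j\<in>I. \<forall>x\<in>space ?MI. \<forall>y\<in>space M. \<bar>g (x(j:=y)) - g x\<bar> \<le> c"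
  proof (intro ballI)
    fix j x y assume j: "j \<in> I" and x: "x \<in> space ?MI" and y: "y \<in> space M"
    have ij: "i \<noteq> j" using j insert.hyps by auto
    have xj: "x(j := y) \<in> space ?MI"
      using x y j by (auto simp: space_PiM PiE_iff extensional_def)
    have "g (x(j:=y)) - g x = (\<integral>z. f (x(j:=y, i:=z)) - f (x(i:=z)) \<partial>M)"
      unfolding g_def using fu_int[OF x] fu_int[OF xj] by (simp add: Bochner_Integration.integral_diff)
    also have "\<bar>\<dots>\<bar> \<le> (\<integral>z. \<bar>f (x(j:=y, i:=z)) - f (x(i:=z))\<bar> \<partial>M)"
      by (rule integral_abs_bound)
    also have "\<dots> \<le> (\<integral>z. c \<partial>M)"
    proof (intro integral_mono)
      show "integrable M (\<lambda>z. \<bar>f (x(j:=y, i:=z)) - f (x(i:=z))\<bar>)"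
        using fu_int[OF x] fu_int[OF xj] by auto
      fix z assume z: "z \<in> space M"
      have "x(j:=y, i:=z) = (x(i:=z))(j:=y)" using ij by (simp add: fun_upd_twist)
      moreover have "\<bar>f ((x(i:=z))(j:=y)) - f (x(i:=z))\<bar> \<le> c"
        using diff upd_space_PiM[OF x z] j y by blast
      ultimately show "\<bar>f (x(j:=y, i:=z)) - f (x(i:=z))\<bar> \<le> c"
        by simp
    qed simp
    finally show "\<bar>g (x(j:=y)) - g x\<bar> \<le> c" by (simp add: M.prob_space)
  qed
  have IH: "(\<integral>\<^sup>+x. ennreal (exp (l * (g x - (\<integral>x. g x \<partial>?MI)))) \<partial>?MI)
          \<le> ennreal (exp (l\<^sup>2 * real (card I) * c\<^sup>2 / 8))"
    by (rule insert.IH[OF g_meas g_bnd g_diff])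
  have f_int: "integrable ?MI' f"
    using bnd by (intro MI'.integrable_const_bound[where B=B]) auto
  have Ef: "(\<integral>x. f x \<partial>?MI') = (\<integral>x. g x \<partial>?MI)"
    unfolding g_def using PP.product_integral_insert[OF insert.hyps f_int] .
  have hoeff: "(\<integral>\<^sup>+y. ennreal (exp (l * (f (x(i:=y)) - g x))) \<partial>M) \<le> ennreal (exp (l\<^sup>2 * c\<^sup>2 / 8))"
    if x: "x \<in> space ?MI" for x
  proof -
    define h where "h y = f (x(i:=y))" for y
    define a where "a = (INF y\<in>space M. h y)"
    have ne: "space M \<noteq> {}" by (rule M.not_empty)
    have hb: "\<bar>h y\<bar> \<le> B" if "y \<in> space M" for y
      using bnd upd_space_PiM[OF x that] unfolding h_def by auto
    have bdd: "bdd_below (h ` space M)"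
      using hb by (intro bdd_belowI[where m="-B"]) force
    have lo: "a \<le> h y" if "y \<in> space M" for y
      unfolding a_def using bdd that by (rule cINF_lower)
    have hi: "h y \<le> a + c" if y: "y \<in> space M" for y
    proof -
      have "h y - c \<le> a"
        unfolding a_def
      proof (rule cINF_greatest[OF ne])
        fix y' assume y': "y' \<in> space M"
        have "x(i:=y, i:=y') = (x(i:=y))(i:=y')" by simp
        moreover have "\<bar>f ((x(i:=y))(i:=y')) - f (x(i:=y))\<bar> \<le> c"
          using diff upd_space_PiM[OF x y, of i] y' by blast
        ultimately have "\<bar>f (x(i:=y')) - f (x(i:=y))\<bar> \<le> c" by simp
        then show "h y - c \<le> h y'" unfolding h_def by simp
      qed
      then show ?thesis by simp
    qed
    interpret H: interval_bounded_random_variable M h a "a + c"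
      by unfold_locales (use fu_meas2[OF x] lo hi in \<open>auto simp: h_def[abs_def]\<close>)
    have "(\<integral>\<^sup>+y. ennreal (exp (l * (h y - M.expectation h))) \<partial>M) \<le> ennreal (exp (l\<^sup>2 * (a + c - a)\<^sup>2 / 8))"
      by (rule H.Hoeffdings_lemma_nn_integral[OF l])
    moreover have "M.expectation h = g x" by (simp add: h_def[abs_def] g_def)
    ultimately show ?thesis by (simp add: h_def)
  qed
  have "(\<integral>\<^sup>+x. ennreal (exp (l * (f x - (\<integral>x. f x \<partial>?MI')))) \<partial>?MI')
      = (\<integral>\<^sup>+x. (\<integral>\<^sup>+y. ennreal (exp (l * (f (x(i:=y)) - (\<integral>x. f x \<partial>?MI')))) \<partial>M) \<partial>?MI)"
    by (rule PP.product_nn_integral_insert[OF insert.hyps]) measurable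
  also have "\<dots> = (\<integral>\<^sup>+x. ennreal (exp (l * (g x - (\<integral>x. g x \<partial>?MI)))) *
        (\<integral>\<^sup>+y. ennreal (exp (l * (f (x(i:=y)) - g x))) \<partial>M) \<partial>?MI)"
  proof (rule nn_integral_cong)
    fix x assume x: "x \<in> space ?MI"
    have "(\<integral>\<^sup>+y. ennreal (exp (l * (f (x(i:=y)) - (\<integral>x. f x \<partial>?MI')))) \<partial>M)
        = (\<integral>\<^sup>+y. ennreal (exp (l * (g x - (\<integral>x. g x \<partial>?MI)))) * ennreal (exp (l * (f (x(i:=y)) - g x))) \<partial>M)"
      by (intro nn_integral_cong)
         (simp add: Ef ennreal_mult[symmetric] exp_add[symmetric] algebra_simps)
    also have "\<dots> = ennreal (exp (l * (g x - (\<integral>x. g x \<partial>?MI)))) * (\<integral>\<^sup>+y. ennreal (exp (l * (f (x(i:=y)) - g x))) \<partial>M)"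
      by (rule nn_integral_cmult) (use fu_meas2[OF x] in measurable)
    finally show "(\<integral>\<^sup>+y. ennreal (exp (l * (f (x(i:=y)) - (\<integral>x. f x \<partial>?MI')))) \<partial>M) = \<dots>" .
  qed
  also have "\<dots> \<le> (\<integral>\<^sup>+x. ennreal (exp (l * (g x - (\<integral>x. g x \<partial>?MI)))) * ennreal (exp (l\<^sup>2 * c\<^sup>2 / 8)) \<partial>?MI)"
    by (intro nn_integral_mono mult_left_mono hoeff) auto
  also have "\<dots> = (\<integral>\<^sup>+x. ennreal (exp (l * (g x - (\<integral>x. g x \<partial>?MI)))) \<partial>?MI) * ennreal (exp (l\<^sup>2 * c\<^sup>2 / 8))"
    by (rule nn_integral_multc) measurable
  also have "\<dots> \<le> ennreal (exp (l\<^sup>2 * real (card I) * c\<^sup>2 / 8)) * ennreal (exp (l\<^sup>2 * c\<^sup>2 / 8))"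
    by (intro mult_right_mono IH) auto
  also have "\<dots> = ennreal (exp (l\<^sup>2 * real (card (insert i I)) * c\<^sup>2 / 8))"
    using insert.hyps by (simp add: ennreal_mult[symmetric] exp_add[symmetric] algebra_simps add_divide_distrib)
  finally show ?case .
qed

lemma mcdiarmid_tail:
  fixes M :: "'a measure" and I :: "'i set"
  assumes M: "prob_space M" and I: "finite I" "I \<noteq> {}" and c: "c > 0" and t: "t > 0"
    and f[measurable]: "f \<in> borel_measurable (PiM I (\<lambda>_. M))"
    and bnd: "\<forall>x\<in>space (PiM I (\<lambda>_. M)). \<bar>f x\<bar> \<le> B"
    and diff: "\<forall>i\<in>I. \<forall>x\<in>space (PiM I (\<lambda>_. M)). \<forall>y\<in>space M. \<bar>f (x(i:=y)) - f x\<bar> \<le> c"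
  shows "measure (PiM I (\<lambda>_. M)) {x \<in> space (PiM I (\<lambda>_. M)). f x \<ge> (\<integral>x. f x \<partial>PiM I (\<lambda>_. M)) + t}
          \<le> exp (- 2 * t\<^sup>2 / (real (card I) * c\<^sup>2))"
proof -
  let ?P = "PiM I (\<lambda>_. M)"
  interpret P: prob_space ?P by (rule prob_space_PiM) (simp add: M)
  define E where "E = (\<integral>x. f x \<partial>?P)"
  define n where "n = real (card I)"
  have n: "n > 0" using I by (simp add: n_def card_gt_0_iff)
  define l where "l = 4 * t / (n * c\<^sup>2)"
  have l: "l > 0" using n c t by (simp add: l_def)
  let ?A = "{x \<in> space ?P. f x \<ge> E + t}"
  have "emeasure ?P ?A = (\<integral>\<^sup>+x. indicator ?A x \<partial>?P)"
    by (rule nn_integral_indicator[symmetric]) measurable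
  also have "\<dots> \<le> (\<integral>\<^sup>+x. ennreal (exp (- l * t)) * ennreal (exp (l * (f x - E))) \<partial>?P)"
  proof (intro nn_integral_mono)
    fix x assume x: "x \<in> space ?P"
    show "indicator ?A x \<le> ennreal (exp (- l * t)) * ennreal (exp (l * (f x - E)))"
    proof (cases "x \<in> ?A")
      case True
      then have "l * t \<le> l * (f x - E)" using l by (intro mult_left_mono) auto
      then have "1 \<le> exp (- l * t) * exp (l * (f x - E))"
        by (simp add: exp_add[symmetric])
      then show ?thesis using True by (simp add: ennreal_mult[symmetric])
    qed simp
  qed
  also have "\<dots> = ennreal (exp (- l * t)) * (\<integral>\<^sup>+x. ennreal (exp (l * (f x - E))) \<partial>?P)"
    by (rule nn_integral_cmult) measurable
  also have "\<dots> \<le> ennreal (exp (- l * t)) * ennreal (exp (l\<^sup>2 * n * c\<^sup>2 / 8))"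
    unfolding E_def n_def
    by (intro mult_left_mono mcdiarmid_mgf[OF M l, of c I f B] I f bnd diff) (use c in auto)
  also have "\<dots> = ennreal (exp (- 2 * t\<^sup>2 / (n * c\<^sup>2)))"
  proof -
    have "- l * t + l\<^sup>2 * n * c\<^sup>2 / 8 = - 2 * t\<^sup>2 / (n * c\<^sup>2)"
      using n c by (simp add: l_def field_simps power2_eq_square)
    then show ?thesis by (simp add: ennreal_mult[symmetric] exp_add[symmetric])
  qed
  finally have "emeasure ?P ?A \<le> ennreal (exp (- 2 * t\<^sup>2 / (n * c\<^sup>2)))" .
  then show ?thesis unfolding E_def n_def
    by (simp add: P.emeasure_eq_measure)
qed


lemma mink_nn:
  fixes f g :: "'a \<Rightarrow> real"
  assumes [measurable]: "f \<in> borel_measurable M" "g \<in> borel_measurable M"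
    and fA: "(\<integral>\<^sup>+x. ennreal ((f x)\<^sup>2) \<partial>M) < \<infinity>" and gB: "(\<integral>\<^sup>+x. ennreal ((g x)\<^sup>2) \<partial>M) < \<infinity>"
  shows "(\<integral>\<^sup>+x. ennreal ((f x + g x)\<^sup>2) \<partial>M) < \<infinity>"
    and "sqrt (enn2real (\<integral>\<^sup>+x. ennreal ((f x + g x)\<^sup>2) \<partial>M))
          \<le> sqrt (enn2real (\<integral>\<^sup>+x. ennreal ((f x)\<^sup>2) \<partial>M)) + sqrt (enn2real (\<integral>\<^sup>+x. ennreal ((g x)\<^sup>2) \<partial>M))"
proof -
  define A where "A = (\<integral>\<^sup>+x. ennreal ((f x)\<^sup>2) \<partial>M)"
  define B where "B = (\<integral>\<^sup>+x. ennreal ((g x)\<^sup>2) \<partial>M)"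
  define X where "X = (\<integral>\<^sup>+x. ennreal (\<bar>f x\<bar> * \<bar>g x\<bar>) \<partial>M)"
  define S where "S = (\<integral>\<^sup>+x. ennreal ((f x + g x)\<^sup>2) \<partial>M)"
  have CS: "X\<^sup>2 \<le> A * B"
  proof -
    have "(\<integral>\<^sup>+x. ennreal \<bar>f x\<bar> * ennreal \<bar>g x\<bar> \<partial>M)\<^sup>2 \<le> (\<integral>\<^sup>+x. ennreal \<bar>f x\<bar> ^ 2 \<partial>M) * (\<integral>\<^sup>+x. ennreal \<bar>g x\<bar> ^ 2 \<partial>M)"
      by (rule Cauchy_Schwarz_nn_integral) measurable
    then show ?thesis
      by (simp add: A_def B_def X_def ennreal_mult[symmetric] ennreal_power)
  qed
  have "S \<le> (\<integral>\<^sup>+x. ennreal ((f x)\<^sup>2) + ennreal ((g x)\<^sup>2) + 2 * ennreal (\<bar>f x\<bar> * \<bar>g x\<bar>) \<partial>M)"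
    unfolding S_def
  proof (intro nn_integral_mono)
    fix x
    have "(f x + g x)\<^sup>2 \<le> (f x)\<^sup>2 + (g x)\<^sup>2 + 2 * (\<bar>f x\<bar> * \<bar>g x\<bar>)"
      by (simp add: power2_eq_square algebra_simps abs_mult[symmetric])
    then have "ennreal ((f x + g x)\<^sup>2) \<le> ennreal ((f x)\<^sup>2 + (g x)\<^sup>2 + 2 * (\<bar>f x\<bar> * \<bar>g x\<bar>))"
      by (rule ennreal_leI)
    also have "\<dots> = ennreal ((f x)\<^sup>2) + ennreal ((g x)\<^sup>2) + ennreal (2 * (\<bar>f x\<bar> * \<bar>g x\<bar>))"
      by (simp add: ennreal_plus)
    also have "ennreal (2 * (\<bar>f x\<bar> * \<bar>g x\<bar>)) = 2 * ennreal (\<bar>f x\<bar> * \<bar>g x\<bar>)"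
      by (simp add: ennreal_mult)
    finally show "ennreal ((f x + g x)\<^sup>2) \<le> ennreal ((f x)\<^sup>2) + ennreal ((g x)\<^sup>2) + 2 * ennreal (\<bar>f x\<bar> * \<bar>g x\<bar>)" .
  qed
  also have "\<dots> = A + B + 2 * X"
    unfolding A_def B_def X_def
    by (simp add: nn_integral_add nn_integral_cmult)
  finally have SX: "S \<le> A + B + 2 * X" .
  obtain a where a: "A = ennreal a" "a \<ge> 0" using fA unfolding A_def[symmetric]
    by (cases A) auto
  obtain b where b: "B = ennreal b" "b \<ge> 0" using gB unfolding B_def[symmetric]
    by (cases B) auto
  have "X\<^sup>2 < \<infinity>" using CS a b by (auto simp: ennreal_mult[symmetric] top_unique intro: le_less_trans)
  then have "X < \<infinity>" by (simp add: power_less_top_ennreal)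
  then obtain x where x: "X = ennreal x" "x \<ge> 0" by (cases X) auto
  have "x\<^sup>2 \<le> a * b" using CS a b x by (simp add: ennreal_power ennreal_mult[symmetric])
  then have xab: "x \<le> sqrt a * sqrt b"
  proof -
    have "sqrt (x\<^sup>2) \<le> sqrt (a * b)" using \<open>x\<^sup>2 \<le> a * b\<close> by (rule real_sqrt_le_mono)
    then show ?thesis using x by (simp add: real_sqrt_mult)
  qed
  have "ennreal (a + b + 2 * x) = A + B + 2 * X"
    using a b x by (simp add: ennreal_plus ennreal_mult)
  then have "S \<le> ennreal (a + b + 2 * x)" using SX by simp
  then show "S < \<infinity>" using le_less_trans[of S "ennreal (a + b + 2 * x)" \<infinity>] by simp
  from \<open>S \<le> ennreal (a + b + 2 * x)\<close> have "enn2real S \<le> a + b + 2 * x"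
    using a b x by (simp add: enn2real_leI)
  also have "\<dots> \<le> (sqrt a + sqrt b)\<^sup>2"
    using a b xab by (simp add: power2_eq_square algebra_simps)
  finally have "sqrt (enn2real S) \<le> sqrt ((sqrt a + sqrt b)\<^sup>2)"
    by (rule real_sqrt_le_mono)
  then have "sqrt (enn2real S) \<le> sqrt a + sqrt b"
    using a b by simp
  then show "sqrt (enn2real S) \<le> sqrt (enn2real A) + sqrt (enn2real B)"
    using a b by simp
qed


definition wt :: "real \<Rightarrow> real \<Rightarrow> 'a::euclidean_space \<Rightarrow> real" where
  "wt s r z = exp ((norm z + r)\<^sup>2 / (2 * s\<^sup>2)) / (2 * pi * s\<^sup>2) powr (- real DIM('a) / 2)"

definition Kc :: "real \<Rightarrow> real \<Rightarrow> 'a::euclidean_space itself \<Rightarrow> real" where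
  "Kc s r _ = 2 powr (real DIM('a) / 2) * exp (6 * r\<^sup>2 / s\<^sup>2)"

lemma gk_meas[measurable]: "gauss_kernel s \<in> borel_measurable borel"
  unfolding gauss_kernel_def[abs_def] by measurable

lemma wt_meas[measurable]: "wt s r \<in> borel_measurable borel"
  unfolding wt_def[abs_def] by measurable

lemma gk_pos: "s > 0 \<Longrightarrow> gauss_kernel s x > 0"
  by (simp add: gauss_kernel_def)

lemma gk_le: "s > 0 \<Longrightarrow> gauss_kernel s (x::'a::euclidean_space) \<le> (2 * pi * s\<^sup>2) powr (- real DIM('a) / 2)"
  by (simp add: gauss_kernel_def)

lemma wt_pos: "s > 0 \<Longrightarrow> wt s r z > 0"
  by (simp add: wt_def)

lemma Kc_pos: "Kc s r TYPE('a::euclidean_space) > 0"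
  by (simp add: Kc_def)

lemma gk_lower:
  fixes y z :: "'a::euclidean_space"
  assumes s: "s > 0" and y: "norm y \<le> r"
  shows "1 / wt s r z \<le> gauss_kernel s (z - y)"
proof -
  have "norm (z - y) \<le> norm z + r" using y norm_triangle_ineq4[of z y] by linarith
  then have "(norm (z - y))\<^sup>2 \<le> (norm z + r)\<^sup>2" by (intro power_mono) auto
  then have "- (norm z + r)\<^sup>2 / (2 * s\<^sup>2) \<le> - (norm (z - y))\<^sup>2 / (2 * s\<^sup>2)"
    using s by (simp add: divide_right_mono)
  then have e: "exp (- (norm z + r)\<^sup>2 / (2 * s\<^sup>2)) \<le> exp (- (norm (z - y))\<^sup>2 / (2 * s\<^sup>2))" by simp
  define c where "c = (2 * pi * s\<^sup>2) powr (- real DIM('a) / 2)"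
  have c: "c > 0" using s by (simp add: c_def)
  have "1 / wt s r z = c * exp (- (norm z + r)\<^sup>2 / (2 * s\<^sup>2))"
    by (simp add: wt_def c_def exp_minus field_simps)
  also have "\<dots> \<le> c * exp (- (norm (z - y))\<^sup>2 / (2 * s\<^sup>2))"
    using e c by simp
  also have "\<dots> = gauss_kernel s (z - y)"
    by (simp add: gauss_kernel_def c_def)
  finally show ?thesis .
qed

lemma nn_integral_translate:
  fixes f :: "'a::euclidean_space \<Rightarrow> ennreal"
  assumes [measurable]: "f \<in> borel_measurable borel"
  shows "(\<integral>\<^sup>+z. f (z - y) \<partial>lborel) = (\<integral>\<^sup>+z. f z \<partial>lborel)"
proof -
  have "(\<integral>\<^sup>+z. f (z - y) \<partial>lborel) = (\<integral>\<^sup>+z. f (z - y) \<partial>(distr lborel borel ((+) y)))"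
    by (simp add: lborel_distr_plus)
  also have "\<dots> = (\<integral>\<^sup>+z. f z \<partial>lborel)"
    by (simp add: nn_integral_distr)
  finally show ?thesis .
qed

lemma gk_int:
  assumes s: "s > 0"
  shows "(\<integral>\<^sup>+z. ennreal (gauss_kernel s (z - y)) \<partial>lborel) = 1"
proof -
  let ?c = "(2 * pi * s\<^sup>2) powr (- real DIM('a) / 2)"
  have "(\<integral>\<^sup>+z. ennreal (gauss_kernel s (z - y)) \<partial>lborel) = (\<integral>\<^sup>+z. ennreal (gauss_kernel s (z::'a)) \<partial>lborel)"
    by (rule nn_integral_translate[where f="\<lambda>z. ennreal (gauss_kernel s z)"]) measurable
  also have "\<dots> = (\<integral>\<^sup>+z. ennreal ?c * ennreal (exp (- (norm (z::'a))\<^sup>2 / (2 * s\<^sup>2))) \<partial>lborel)"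
    by (simp add: gauss_kernel_def ennreal_mult)
  also have "\<dots> = ennreal ?c * ennreal ((2 * pi * s\<^sup>2) powr (real DIM('a) / 2))"
    using gauss_dd[OF s, where 'a='a] by (simp add: nn_integral_cmult)
  also have "\<dots> = 1"
    using s by (simp add: ennreal_mult[symmetric] powr_add[symmetric])
  finally show ?thesis .
qed

lemma gk_sq_wt:
  fixes y z :: "'a::euclidean_space"
  assumes s: "s > 0" and y: "norm y \<le> r"
  shows "(gauss_kernel s (z - y))\<^sup>2 * wt s r z \<le> Kc s r TYPE('a) * gauss_kernel (sqrt 2 * s) (z - y)"
proof -
  define c where "c = (2 * pi * s\<^sup>2) powr (- real DIM('a) / 2)"
  have c: "c > 0" using s by (simp add: c_def)
  define n where "n = norm (z - y)"
  define m where "m = norm z"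
  have r: "r \<ge> 0" using y norm_ge_zero order_trans by blast
  have n: "n \<ge> 0" "m \<ge> 0" by (auto simp: n_def m_def)
  have mn: "m \<le> n + r" using y norm_triangle_ineq[of "z - y" y] by (simp add: m_def n_def)
  have key: "2 * (m + r)\<^sup>2 \<le> 3 * n\<^sup>2 + 24 * r\<^sup>2"
  proof -
    have "(m + r)\<^sup>2 \<le> (n + 2 * r)\<^sup>2" using mn n r by (intro power_mono) auto
    moreover have "0 \<le> (n - 4 * r)\<^sup>2" by simp
    ultimately show ?thesis by (simp add: power2_eq_square algebra_simps)
  qed
  define A where "A = - n\<^sup>2 / s\<^sup>2 + (m + r)\<^sup>2 / (2 * s\<^sup>2)"
  define B where "B = 6 * r\<^sup>2 / s\<^sup>2 - n\<^sup>2 / (4 * s\<^sup>2)"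
  have AB: "A \<le> B"
  proof -
    have "4 * s\<^sup>2 * A = - 4 * n\<^sup>2 + 2 * (m + r)\<^sup>2" using s by (simp add: A_def field_simps)
    also have "\<dots> \<le> 24 * r\<^sup>2 - n\<^sup>2" using key by simp
    also have "\<dots> = 4 * s\<^sup>2 * B" using s by (simp add: B_def field_simps)
    finally show ?thesis using s by simp
  qed
  have g: "gauss_kernel s (z - y) = c * exp (- n\<^sup>2 / (2 * s\<^sup>2))"
    by (simp add: gauss_kernel_def c_def n_def)
  have w: "wt s r z = exp ((m + r)\<^sup>2 / (2 * s\<^sup>2)) / c"
    by (simp add: wt_def c_def m_def)
  have e1: "exp (- n\<^sup>2 / (2 * s\<^sup>2)) * exp (- n\<^sup>2 / (2 * s\<^sup>2)) = exp (- n\<^sup>2 / (2 * s\<^sup>2) + - n\<^sup>2 / (2 * s\<^sup>2))"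
    by (rule exp_add[symmetric])
  have e2: "- n\<^sup>2 / (2 * s\<^sup>2) + - n\<^sup>2 / (2 * s\<^sup>2) = - n\<^sup>2 / s\<^sup>2"
    using s by (simp add: field_simps)
  have L: "(gauss_kernel s (z - y))\<^sup>2 * wt s r z = c * exp A"
  proof -
    have "(gauss_kernel s (z - y))\<^sup>2 * wt s r z
        = c * (exp (- n\<^sup>2 / (2 * s\<^sup>2)) * exp (- n\<^sup>2 / (2 * s\<^sup>2))) * exp ((m + r)\<^sup>2 / (2 * s\<^sup>2))"
      unfolding g w using c by (simp add: power2_eq_square field_simps)
    also have "\<dots> = c * (exp (- n\<^sup>2 / s\<^sup>2) * exp ((m + r)\<^sup>2 / (2 * s\<^sup>2)))"
      unfolding e1 e2 by simp
    also have "\<dots> = c * exp A" unfolding A_def exp_add by (rule refl)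
    finally show ?thesis .
  qed
  have "(2 * pi * (sqrt 2 * s)\<^sup>2) powr (- real DIM('a) / 2) = 2 powr (- real DIM('a) / 2) * c"
    using s by (simp add: c_def power_mult_distrib powr_mult[symmetric] mult.assoc)
  then have R: "Kc s r TYPE('a) * gauss_kernel (sqrt 2 * s) (z - y) = c * exp B"
    using s by (simp add: Kc_def gauss_kernel_def B_def n_def[symmetric] power_mult_distrib
       exp_diff powr_add[symmetric] exp_add[symmetric] field_simps)
  show ?thesis unfolding L R using AB c by simp
qed

lemma gk_sq_int:
  fixes y :: "'a::euclidean_space"
  assumes s: "s > 0" and y: "norm y \<le> r"
  shows "(\<integral>\<^sup>+z. ennreal ((gauss_kernel s (z - y))\<^sup>2 * wt s r z) \<partial>lborel) \<le> ennreal (Kc s r TYPE('a))"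
proof -
  have "(\<integral>\<^sup>+z. ennreal ((gauss_kernel s (z - y))\<^sup>2 * wt s r z) \<partial>lborel)
      \<le> (\<integral>\<^sup>+z. ennreal (Kc s r TYPE('a)) * ennreal (gauss_kernel (sqrt 2 * s) (z - y)) \<partial>lborel)"
  proof (intro nn_integral_mono)
    fix z
    have "ennreal ((gauss_kernel s (z - y))\<^sup>2 * wt s r z) \<le> ennreal (Kc s r TYPE('a) * gauss_kernel (sqrt 2 * s) (z - y))"
      by (rule ennreal_leI) (rule gk_sq_wt[OF s y])
    also have "\<dots> = ennreal (Kc s r TYPE('a)) * ennreal (gauss_kernel (sqrt 2 * s) (z - y))"
      using Kc_pos[where 'a='a, of s r] gk_pos[of "sqrt 2 * s" "z - y"] s by (intro ennreal_mult) auto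
    finally show "ennreal ((gauss_kernel s (z - y))\<^sup>2 * wt s r z) \<le> \<dots>" .
  qed
  also have "\<dots> = ennreal (Kc s r TYPE('a))"
    using s by (simp add: nn_integral_cmult gk_int)
  finally show ?thesis .
qed


definition mix :: "real \<Rightarrow> 'a::euclidean_space measure \<Rightarrow> 'a \<Rightarrow> real" where
  "mix s \<nu> z = (\<integral>y. gauss_kernel s (z - y) \<partial>\<nu>)"

locale gmix =
  fixes s r :: real and \<nu> :: "'a::euclidean_space measure"
  assumes s_pos: "s > 0" and prob: "prob_space \<nu>" and sets_eq: "sets \<nu> = sets borel"
    and supp: "AE y in \<nu>. norm y \<le> r"
begin

interpretation N: prob_space \<nu> by (rule prob)

lemma space_eq: "space \<nu> = UNIV"
  using sets_eq_imp_space_eq[OF sets_eq] by simp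

lemma meas_nu: "measurable \<nu> = measurable borel"
  by (intro ext measurable_cong_sets) (simp_all add: sets_eq)

lemma meas_pair: "measurable (lborel \<Otimes>\<^sub>M \<nu>) = measurable (borel \<Otimes>\<^sub>M borel)"
  by (intro ext measurable_cong_sets sets_pair_measure_cong) (simp_all add: sets_eq)

lemma gk_pair_meas:
  "(\<lambda>(z, y). f (gauss_kernel s (z - y)) (z::'a)) \<in> borel_measurable (lborel \<Otimes>\<^sub>M \<nu>)"
  if [measurable]: "(\<lambda>(a, z). f a z) \<in> borel_measurable (borel \<Otimes>\<^sub>M borel)"
proof -
  have "(\<lambda>(z, y). f (gauss_kernel s (z - y)) (z::'a)) \<in> borel_measurable (borel \<Otimes>\<^sub>M borel)"
  proof -
    have "(\<lambda>p. (gauss_kernel s (fst p - snd p), fst p)) \<in> measurable (borel \<Otimes>\<^sub>M borel) (borel \<Otimes>\<^sub>M borel)"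
      by measurable
    from measurable_compose[OF this that] show ?thesis by (simp add: split_beta')
  qed
  then show ?thesis by (simp add: meas_pair)
qed

lemma r_nonneg: "r \<ge> 0"
proof -
  have "AE y in \<nu>. 0 \<le> r" using supp by (rule eventually_mono) (rule order_trans[OF norm_ge_zero])
  then show ?thesis by simp
qed

lemma gk_int1: "integrable \<nu> (\<lambda>y. gauss_kernel s (z - y))"
proof (rule N.integrable_const_bound[where B="(2 * pi * s\<^sup>2) powr (- real DIM('a) / 2)"])
  show "AE x in \<nu>. norm (gauss_kernel s (z - x)) \<le> (2 * pi * s\<^sup>2) powr (- real DIM('a) / 2)"
  proof (rule AE_I2)
    fix x
    show "norm (gauss_kernel s (z - x)) \<le> (2 * pi * s\<^sup>2) powr (- real DIM('a) / 2)"
      using gk_le[OF s_pos, of "z - x"] gk_pos[OF s_pos, of "z - x"] by simp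
  qed
  show "(\<lambda>y. gauss_kernel s (z - y)) \<in> borel_measurable \<nu>"
    unfolding meas_nu by measurable
qed

lemma mix_meas[measurable]: "mix s \<nu> \<in> borel_measurable borel"
proof -
  have "(\<lambda>z. \<integral>y. gauss_kernel s (z - y) \<partial>\<nu>) \<in> borel_measurable lborel"
    by (rule N.borel_measurable_lebesgue_integral) (unfold meas_pair, measurable)
  then show ?thesis unfolding mix_def[abs_def] by simp
qed

lemma mix_nn: "ennreal (mix s \<nu> z) = (\<integral>\<^sup>+y. ennreal (gauss_kernel s (z - y)) \<partial>\<nu>)"
  unfolding mix_def
  by (rule nn_integral_eq_integral[symmetric]) (use gk_int1 gk_pos[OF s_pos] in \<open>auto intro: less_imp_le\<close>)

lemma mix_lower: "1 / wt s r z \<le> mix s \<nu> z"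
proof -
  have "(\<integral>y. 1 / wt s r z \<partial>\<nu>) \<le> mix s \<nu> z"
    unfolding mix_def using supp
    by (intro integral_mono_AE gk_int1) (auto intro: gk_lower[OF s_pos] eventually_mono)
  then show ?thesis by (simp add: N.prob_space)
qed

lemma mix_pos: "mix s \<nu> z > 0"
proof -
  have "0 < 1 / wt s r z" using wt_pos[OF s_pos, of r z] by simp
  then show ?thesis using mix_lower[of z] by (rule less_le_trans)
qed

lemma mix_int: "(\<integral>\<^sup>+z. ennreal (mix s \<nu> z) \<partial>lborel) = 1"
proof -
  interpret PS: pair_sigma_finite lborel \<nu> by unfold_locales
  have "(\<integral>\<^sup>+z. ennreal (mix s \<nu> z) \<partial>lborel) = (\<integral>\<^sup>+z. (\<integral>\<^sup>+y. ennreal (gauss_kernel s (z - y)) \<partial>\<nu>) \<partial>lborel)"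
    by (simp add: mix_nn)
  also have "\<dots> = (\<integral>\<^sup>+y. (\<integral>\<^sup>+z. ennreal (gauss_kernel s (z - y)) \<partial>lborel) \<partial>\<nu>)"
    by (rule PS.Fubini'[symmetric]) (unfold meas_pair, measurable)
  also have "\<dots> = (\<integral>\<^sup>+y. 1 \<partial>\<nu>)"
    by (simp add: gk_int[OF s_pos])
  also have "\<dots> = 1" by (simp add: N.emeasure_space_1)
  finally show ?thesis .
qed

lemma sq_fubini: "(\<integral>\<^sup>+z. (\<integral>\<^sup>+y. ennreal ((gauss_kernel s (z - y))\<^sup>2 * wt s r z) \<partial>\<nu>) \<partial>lborel) \<le> ennreal (Kc s r TYPE('a))"
proof -
  interpret PS: pair_sigma_finite lborel \<nu> by unfold_locales
  have "(\<integral>\<^sup>+z. (\<integral>\<^sup>+y. ennreal ((gauss_kernel s (z - y))\<^sup>2 * wt s r z) \<partial>\<nu>) \<partial>lborel)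
      = (\<integral>\<^sup>+y. (\<integral>\<^sup>+z. ennreal ((gauss_kernel s (z - y))\<^sup>2 * wt s r z) \<partial>lborel) \<partial>\<nu>)"
    by (rule PS.Fubini'[symmetric]) (unfold meas_pair, measurable)
  also have "\<dots> \<le> (\<integral>\<^sup>+y. ennreal (Kc s r TYPE('a)) \<partial>\<nu>)"
    using supp by (intro nn_integral_mono_AE) (auto intro: gk_sq_int[OF s_pos] eventually_mono)
  also have "\<dots> = ennreal (Kc s r TYPE('a))" by (simp add: N.emeasure_space_1)
  finally show ?thesis .
qed

lemma mix_sq: "(\<integral>\<^sup>+z. ennreal ((mix s \<nu> z)\<^sup>2 * wt s r z) \<partial>lborel) \<le> ennreal (Kc s r TYPE('a))"
proof -
  have "(\<integral>\<^sup>+z. ennreal ((mix s \<nu> z)\<^sup>2 * wt s r z) \<partial>lborel)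
      \<le> (\<integral>\<^sup>+z. (\<integral>\<^sup>+y. ennreal ((gauss_kernel s (z - y))\<^sup>2 * wt s r z) \<partial>\<nu>) \<partial>lborel)"
  proof (intro nn_integral_mono)
    fix z
    have "(\<integral>\<^sup>+y. ennreal (gauss_kernel s (z - y)) * 1 \<partial>\<nu>)\<^sup>2
        \<le> (\<integral>\<^sup>+y. ennreal (gauss_kernel s (z - y)) ^ 2 \<partial>\<nu>) * (\<integral>\<^sup>+y. 1 ^ 2 \<partial>\<nu>)"
      by (rule Cauchy_Schwarz_nn_integral) (simp_all add: meas_nu)
    then have "(ennreal (mix s \<nu> z))\<^sup>2 \<le> (\<integral>\<^sup>+y. ennreal ((gauss_kernel s (z - y))\<^sup>2) \<partial>\<nu>)"
      by (simp add: mix_nn N.emeasure_space_1 ennreal_power gk_pos[OF s_pos] less_imp_le)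
    then have "(ennreal (mix s \<nu> z))\<^sup>2 * ennreal (wt s r z) \<le> (\<integral>\<^sup>+y. ennreal ((gauss_kernel s (z - y))\<^sup>2) \<partial>\<nu>) * ennreal (wt s r z)"
      by (rule mult_right_mono) simp
    also have "\<dots> = (\<integral>\<^sup>+y. ennreal ((gauss_kernel s (z - y))\<^sup>2 * wt s r z) \<partial>\<nu>)"
      using wt_pos[OF s_pos, of r z]
      by (subst nn_integral_multc[symmetric]) (simp_all add: meas_nu ennreal_mult)
    also have "(ennreal (mix s \<nu> z))\<^sup>2 * ennreal (wt s r z) = ennreal ((mix s \<nu> z)\<^sup>2 * wt s r z)"
      using wt_pos[OF s_pos, of r z] mix_pos[of z] by (simp add: ennreal_mult ennreal_power)
    finally show "ennreal ((mix s \<nu> z)\<^sup>2 * wt s r z) \<le> (\<integral>\<^sup>+y. ennreal ((gauss_kernel s (z - y))\<^sup>2 * wt s r z) \<partial>\<nu>)" .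
  qed
  also have "\<dots> \<le> ennreal (Kc s r TYPE('a))" by (rule sq_fubini)
  finally show ?thesis .
qed

end


lemma kl_pointwise:
  fixes a b w :: real
  assumes a: "a > 0" and b: "b > 0" and w: "1 / b \<le> w"
  shows "a - b \<le> a * ln (a / b)" and "a * ln (a / b) \<le> (b - a)\<^sup>2 * w + a - b"
proof -
  have "ln (b / a) \<le> b / a - 1" using a b by (intro ln_le_minus_one) simp
  moreover have "ln (a / b) = - ln (b / a)" using a b by (simp add: ln_div)
  ultimately have "1 - b / a \<le> ln (a / b)" by simp
  then have "a * (1 - b / a) \<le> a * ln (a / b)" using a by (intro mult_left_mono) auto
  then show "a - b \<le> a * ln (a / b)" using a by (simp add: algebra_simps)
  have "ln (a / b) \<le> a / b - 1" using a b by (intro ln_le_minus_one) simp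
  then have "a * ln (a / b) \<le> a * (a / b - 1)" using a by (intro mult_left_mono) auto
  also have "a * (a / b - 1) = (b - a)\<^sup>2 * (1 / b) + a - b"
    using b by (simp add: field_simps power2_eq_square)
  also have "(b - a)\<^sup>2 * (1 / b) \<le> (b - a)\<^sup>2 * w" using w by (intro mult_left_mono) auto
  finally show "a * ln (a / b) \<le> (b - a)\<^sup>2 * w + a - b" by simp
qed

lemma kl_bound:
  fixes \<nu>1 \<nu>2 :: "'a::euclidean_space measure"
  assumes G1: "gmix s r \<nu>1" and G2: "gmix s r \<nu>2"
  shows "integrable lborel (\<lambda>z. mix s \<nu>1 z * ln (mix s \<nu>1 z / mix s \<nu>2 z))"
    and "(\<integral>\<^sup>+z. ennreal ((mix s \<nu>2 z - mix s \<nu>1 z)\<^sup>2 * wt s r z) \<partial>lborel) < \<infinity>"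
    and "(\<integral>z. mix s \<nu>1 z * ln (mix s \<nu>1 z / mix s \<nu>2 z) \<partial>lborel)
          \<le> enn2real (\<integral>\<^sup>+z. ennreal ((mix s \<nu>2 z - mix s \<nu>1 z)\<^sup>2 * wt s r z) \<partial>lborel)"
proof -
  interpret A: gmix s r \<nu>1 by (rule G1)
  interpret B: gmix s r \<nu>2 by (rule G2)
  define P where "P = mix s \<nu>1"
  define Q where "Q = mix s \<nu>2"
  define w :: "'a \<Rightarrow> real" where "w = wt s r"
  have [measurable]: "P \<in> borel_measurable borel" "Q \<in> borel_measurable borel" "w \<in> borel_measurable borel"
    by (simp_all add: P_def Q_def w_def)
  have Ppos: "P z > 0" and Qpos: "Q z > 0" and wpos: "w z > 0" for z
    using A.mix_pos B.mix_pos wt_pos[OF A.s_pos] by (simp_all add: P_def Q_def w_def)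
  have Qlow: "1 / Q z \<le> w z" for z
  proof -
    have "1 / w z \<le> Q z" using B.mix_lower by (simp add: Q_def w_def)
    then show ?thesis using wpos[of z] Qpos[of z] by (simp add: field_simps)
  qed
  let ?K = "Kc s r TYPE('a)"
  have fin: "(\<integral>\<^sup>+z. ennreal ((Q z - P z)\<^sup>2 * w z) \<partial>lborel) < \<infinity>"
  proof -
    have "(\<integral>\<^sup>+z. ennreal ((Q z - P z)\<^sup>2 * w z) \<partial>lborel)
        \<le> (\<integral>\<^sup>+z. 2 * ennreal ((Q z)\<^sup>2 * w z) + 2 * ennreal ((P z)\<^sup>2 * w z) \<partial>lborel)"
    proof (intro nn_integral_mono)
      fix z
      have "(Q z - P z)\<^sup>2 * w z \<le> 2 * ((Q z)\<^sup>2 * w z) + 2 * ((P z)\<^sup>2 * w z)"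
      proof -
        have "(Q z - P z)\<^sup>2 \<le> 2 * (Q z)\<^sup>2 + 2 * (P z)\<^sup>2"
          using sum_squares_ge_zero[of "Q z + P z" 0] by (simp add: power2_eq_square algebra_simps)
        then have "(Q z - P z)\<^sup>2 * w z \<le> (2 * (Q z)\<^sup>2 + 2 * (P z)\<^sup>2) * w z"
          using wpos[of z] by (intro mult_right_mono) auto
        then show ?thesis by (simp add: algebra_simps)
      qed
      then have "ennreal ((Q z - P z)\<^sup>2 * w z) \<le> ennreal (2 * ((Q z)\<^sup>2 * w z) + 2 * ((P z)\<^sup>2 * w z))"
        by (rule ennreal_leI)
      also have "\<dots> = 2 * ennreal ((Q z)\<^sup>2 * w z) + 2 * ennreal ((P z)\<^sup>2 * w z)"
        using wpos[of z] by (simp add: ennreal_plus ennreal_mult)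
      finally show "ennreal ((Q z - P z)\<^sup>2 * w z) \<le> \<dots>" .
    qed
    also have "\<dots> = 2 * (\<integral>\<^sup>+z. ennreal ((Q z)\<^sup>2 * w z) \<partial>lborel) + 2 * (\<integral>\<^sup>+z. ennreal ((P z)\<^sup>2 * w z) \<partial>lborel)"
      by (simp add: nn_integral_add nn_integral_cmult)
    also have "\<dots> \<le> 2 * ennreal ?K + 2 * ennreal ?K"
      using A.mix_sq B.mix_sq unfolding P_def Q_def w_def by (intro add_mono mult_left_mono) auto
    also have "\<dots> < \<infinity>" by (simp add: ennreal_mult_less_top)
    finally show ?thesis .
  qed
  then show "(\<integral>\<^sup>+z. ennreal ((mix s \<nu>2 z - mix s \<nu>1 z)\<^sup>2 * wt s r z) \<partial>lborel) < \<infinity>"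
    by (simp add: P_def Q_def w_def)
  have intD: "integrable lborel (\<lambda>z. (Q z - P z)\<^sup>2 * w z)"
  proof (rule integrableI_nonneg)
    show "AE z in lborel. 0 \<le> (Q z - P z)\<^sup>2 * w z"
      using wpos by (intro AE_I2) (simp add: less_imp_le)
  qed (use fin in auto)
  have intP: "integrable lborel P"
    using A.mix_int Ppos by (intro integrableI_nonneg) (auto intro!: AE_I2 less_imp_le simp: P_def)
  have intQ: "integrable lborel Q"
    using B.mix_int Qpos by (intro integrableI_nonneg) (auto intro!: AE_I2 less_imp_le simp: Q_def)
  have bnds: "P z - Q z \<le> P z * ln (P z / Q z)" "P z * ln (P z / Q z) \<le> (Q z - P z)\<^sup>2 * w z + P z - Q z" for z
    using kl_pointwise[OF Ppos Qpos Qlow] by auto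
  have intH: "integrable lborel (\<lambda>z. P z * ln (P z / Q z))"
  proof (rule Bochner_Integration.integrable_bound)
    show "integrable lborel (\<lambda>z. (Q z - P z)\<^sup>2 * w z + P z + Q z)"
      using intD intP intQ by auto
    show "(\<lambda>z. P z * ln (P z / Q z)) \<in> borel_measurable lborel" by measurable
    show "AE z in lborel. norm (P z * ln (P z / Q z)) \<le> norm ((Q z - P z)\<^sup>2 * w z + P z + Q z)"
    proof (rule AE_I2)
      fix z
      have "0 \<le> (Q z - P z)\<^sup>2 * w z" using wpos[of z] by simp
      then show "norm (P z * ln (P z / Q z)) \<le> norm ((Q z - P z)\<^sup>2 * w z + P z + Q z)"
        using bnds[of z] Ppos[of z] Qpos[of z] by (simp add: abs_le_iff)
    qed
  qed
  then show "integrable lborel (\<lambda>z. mix s \<nu>1 z * ln (mix s \<nu>1 z / mix s \<nu>2 z))"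
    by (simp add: P_def Q_def)
  have "(\<integral>z. P z * ln (P z / Q z) \<partial>lborel) \<le> (\<integral>z. (Q z - P z)\<^sup>2 * w z + P z - Q z \<partial>lborel)"
    using intH intD intP intQ bnds by (intro integral_mono) auto
  also have "\<dots> = (\<integral>z. (Q z - P z)\<^sup>2 * w z \<partial>lborel) + (\<integral>z. P z \<partial>lborel) - (\<integral>z. Q z \<partial>lborel)"
    using intD intP intQ by simp
  also have "(\<integral>z. P z \<partial>lborel) = 1"
    using A.mix_int Ppos by (subst integral_eq_nn_integral) (auto intro!: AE_I2 less_imp_le simp: P_def)
  also have "(\<integral>z. Q z \<partial>lborel) = 1"
    using B.mix_int Qpos by (subst integral_eq_nn_integral) (auto intro!: AE_I2 less_imp_le simp: Q_def)
  also have "(\<integral>z. (Q z - P z)\<^sup>2 * w z \<partial>lborel) = enn2real (\<integral>\<^sup>+z. ennreal ((Q z - P z)\<^sup>2 * w z) \<partial>lborel)"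
  proof (rule integral_eq_nn_integral)
    show "AE z in lborel. 0 \<le> (Q z - P z)\<^sup>2 * w z"
      using wpos by (intro AE_I2) (simp add: less_imp_le)
  qed measurable
  finally show "(\<integral>z. mix s \<nu>1 z * ln (mix s \<nu>1 z / mix s \<nu>2 z) \<partial>lborel)
          \<le> enn2real (\<integral>\<^sup>+z. ennreal ((mix s \<nu>2 z - mix s \<nu>1 z)\<^sup>2 * wt s r z) \<partial>lborel)"
    by (simp add: P_def Q_def w_def)
qed


definition clampR :: "real \<Rightarrow> 'a::euclidean_space \<Rightarrow> 'a" where
  "clampR R v = (if norm v \<le> R then v else (R / norm v) *\<^sub>R v)"

definition emp :: "nat \<Rightarrow> (nat \<Rightarrow> 'a::euclidean_space) \<Rightarrow> 'a measure" where
  "emp N y = distr (measure_pmf (pmf_of_set {1..N})) borel y"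

definition QQ :: "real \<Rightarrow> real \<Rightarrow> nat \<Rightarrow> (nat \<Rightarrow> 'a::euclidean_space) \<Rightarrow> 'a \<Rightarrow> real" where
  "QQ s R N x z = (1 / real N) * (\<Sum>i=1..N. gauss_kernel s (z - clampR R (x i)))"

definition nw :: "('a::euclidean_space \<Rightarrow> real) \<Rightarrow> real" where
  "nw f = sqrt (enn2real (\<integral>\<^sup>+z. ennreal ((f z)\<^sup>2) \<partial>lborel))"

lemma clamp_norm: "R \<ge> 0 \<Longrightarrow> norm (clampR R v) \<le> R"
  by (auto simp: clampR_def)

lemma clamp_id: "norm v \<le> R \<Longrightarrow> clampR R v = v"
  by (simp add: clampR_def)

lemma clamp_meas[measurable]: "clampR R \<in> borel_measurable borel"
  unfolding clampR_def[abs_def] by measurable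

lemma emp_prob: "N \<ge> 1 \<Longrightarrow> prob_space (emp N y)"
  unfolding emp_def by (rule prob_space.prob_space_distr) (auto simp: measure_pmf.prob_space_axioms)

lemma emp_sets: "sets (emp N y) = sets borel"
  by (simp add: emp_def)

lemma emp_gmix:
  assumes s: "s > 0" and N: "N \<ge> 1" and y: "\<forall>i\<in>{1..N}. norm (y i) \<le> r"
  shows "gmix s r (emp N y)"
proof -
  have "AE i in measure_pmf (pmf_of_set {1..N}). norm (y i) \<le> r"
    using N y by (simp add: AE_measure_pmf_iff)
  then have AE: "AE v in emp N y. norm v \<le> r"
    unfolding emp_def by (subst AE_distr_iff) auto
  show ?thesis by (rule gmix.intro[OF s emp_prob[OF N] emp_sets AE])
qed

lemma mix_emp:
  assumes N: "N \<ge> 1"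
  shows "mix s (emp N y) z = (1 / real N) * (\<Sum>i=1..N. gauss_kernel s (z - y i))"
proof -
  have "mix s (emp N y) z = (\<integral>i. gauss_kernel s (z - y i) \<partial>measure_pmf (pmf_of_set {1..N}))"
    unfolding mix_def emp_def by (subst integral_distr) auto
  also have "\<dots> = (\<Sum>i=1..N. gauss_kernel s (z - y i)) / real N"
    using N by (subst integral_pmf_of_set) auto
  finally show ?thesis by simp
qed

lemma QQ_emp: "N \<ge> 1 \<Longrightarrow> QQ s R N x = mix s (emp N (\<lambda>i. clampR R (x i)))"
  by (simp add: QQ_def mix_emp fun_eq_iff)

lemma nw_nonneg: "nw f \<ge> 0"
  by (simp add: nw_def)

lemma nw_uminus: "nw (\<lambda>z. - f z) = nw f"
  by (simp add: nw_def)

lemma nw_add: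
  assumes [measurable]: "f \<in> borel_measurable borel" "g \<in> borel_measurable borel"
    and "(\<integral>\<^sup>+z. ennreal ((f z)\<^sup>2) \<partial>lborel) < \<infinity>" "(\<integral>\<^sup>+z. ennreal ((g z)\<^sup>2) \<partial>lborel) < \<infinity>"
  shows "(\<integral>\<^sup>+z. ennreal ((f z + g z)\<^sup>2) \<partial>lborel) < \<infinity>" "nw (\<lambda>z. f z + g z) \<le> nw f + nw g"
  using mink_nn[of f lborel g] assms by (simp_all add: nw_def)

lemma nw_bound:
  assumes "(\<integral>\<^sup>+z. ennreal ((f z)\<^sup>2) \<partial>lborel) \<le> ennreal B" "B \<ge> 0"
  shows "(\<integral>\<^sup>+z. ennreal ((f z)\<^sup>2) \<partial>lborel) < \<infinity>" "nw f \<le> sqrt B"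
proof -
  show "(\<integral>\<^sup>+z. ennreal ((f z)\<^sup>2) \<partial>lborel) < \<infinity>"
    using assms(1) by (rule le_less_trans) simp
  have "enn2real (\<integral>\<^sup>+z. ennreal ((f z)\<^sup>2) \<partial>lborel) \<le> B"
    using assms by (simp add: enn2real_leI)
  then show "nw f \<le> sqrt B" unfolding nw_def by simp
qed


locale fset = gmix s R \<mu> for s R :: real and \<mu> :: "'a::euclidean_space measure" +
  fixes N :: nat
  assumes N: "N \<ge> 1"
begin

definition fx :: "(nat \<Rightarrow> 'a) \<Rightarrow> 'a \<Rightarrow> real" where
  "fx x z = (QQ s R N x z - mix s \<mu> z) * sqrt (wt s R z)"

definition Fn :: "(nat \<Rightarrow> 'a) \<Rightarrow> real" where
  "Fn x = nw (fx x)"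


lemma R_nonneg: "R \<ge> 0" by (rule r_nonneg)

lemma sq_sqrt_wt: "(sqrt (wt s R z))\<^sup>2 = wt s R z"
  using wt_pos[OF s_pos, of R z] by simp

lemma QQ_meas[measurable]: "QQ s R N x \<in> borel_measurable borel"
  unfolding QQ_def[abs_def] by measurable

lemma fx_meas[measurable]: "fx x \<in> borel_measurable borel"
  unfolding fx_def[abs_def] by measurable

lemma fx_sq: "(fx x z)\<^sup>2 = (QQ s R N x z - mix s \<mu> z)\<^sup>2 * wt s R z"
  using wt_pos[OF s_pos, of R z] by (simp add: fx_def power_mult_distrib)

lemma emp_cl_gmix: "gmix s R (emp N (\<lambda>i. clampR R (x i)))"
  using emp_gmix[OF s_pos N, of "\<lambda>i. clampR R (x i)" R] clamp_norm[OF R_nonneg] by auto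

lemma fx_fin: "(\<integral>\<^sup>+z. ennreal ((fx x z)\<^sup>2) \<partial>lborel) < \<infinity>"
proof -
  have G: "gmix s R \<mu>" by (rule gmix_axioms)
  show ?thesis
    using kl_bound(2)[OF G emp_cl_gmix[of x]] by (simp add: fx_sq QQ_emp[OF N])
qed

lemma Fn_nonneg: "Fn x \<ge> 0"
  by (simp add: Fn_def nw_nonneg)

lemma kern_nw:
  fixes a :: 'a
  assumes a: "norm a \<le> R"
  shows "(\<integral>\<^sup>+z. ennreal ((gauss_kernel s (z - a) / real N * sqrt (wt s R z))\<^sup>2) \<partial>lborel) \<le> ennreal (Kc s R TYPE('a) / (real N)\<^sup>2)"
proof -
  have "(\<integral>\<^sup>+z. ennreal ((gauss_kernel s (z - a) / real N * sqrt (wt s R z))\<^sup>2) \<partial>lborel)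
      = (\<integral>\<^sup>+z. ennreal ((gauss_kernel s (z - a))\<^sup>2 * wt s R z) * ennreal (1 / (real N)\<^sup>2) \<partial>lborel)"
  proof (intro nn_integral_cong)
    fix z
    have "(gauss_kernel s (z - a) / real N * sqrt (wt s R z))\<^sup>2 = ((gauss_kernel s (z - a))\<^sup>2 * wt s R z) * (1 / (real N)\<^sup>2)"
      using wt_pos[OF s_pos, of R z] by (simp add: power_mult_distrib power_divide)
    show "ennreal ((gauss_kernel s (z - a) / real N * sqrt (wt s R z))\<^sup>2) = ennreal ((gauss_kernel s (z - a))\<^sup>2 * wt s R z) * ennreal (1 / (real N)\<^sup>2)"
      unfolding \<open>(gauss_kernel s (z - a) / real N * sqrt (wt s R z))\<^sup>2 = ((gauss_kernel s (z - a))\<^sup>2 * wt s R z) * (1 / (real N)\<^sup>2)\<close>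
      by (rule ennreal_mult) (use wt_pos[OF s_pos, of R z] in simp_all)
  qed
  also have "\<dots> = (\<integral>\<^sup>+z. ennreal ((gauss_kernel s (z - a))\<^sup>2 * wt s R z) \<partial>lborel) * ennreal (1 / (real N)\<^sup>2)"
    by (rule nn_integral_multc) measurable
  also have "\<dots> \<le> ennreal (Kc s R TYPE('a)) * ennreal (1 / (real N)\<^sup>2)"
    by (intro mult_right_mono gk_sq_int[OF s_pos a]) simp
  also have "\<dots> = ennreal (Kc s R TYPE('a) / (real N)\<^sup>2)"
    using Kc_pos[where 'a='a, of s R] by (simp add: ennreal_mult[symmetric])
  finally show ?thesis .
qed

lemma kern_nw':
  fixes a :: 'a
  assumes a: "norm a \<le> R"
  shows "(\<integral>\<^sup>+z. ennreal ((gauss_kernel s (z - a) / real N * sqrt (wt s R z))\<^sup>2) \<partial>lborel) < \<infinity>"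
    and "nw (\<lambda>z. gauss_kernel s (z - a) / real N * sqrt (wt s R z)) \<le> sqrt (Kc s R TYPE('a)) / real N"
proof -
  have K0: "Kc s R TYPE('a) / (real N)\<^sup>2 \<ge> 0" using Kc_pos[where 'a='a, of s R] by simp
  show "(\<integral>\<^sup>+z. ennreal ((gauss_kernel s (z - a) / real N * sqrt (wt s R z))\<^sup>2) \<partial>lborel) < \<infinity>"
    by (rule nw_bound(1)[OF kern_nw[OF a] K0])
  have "nw (\<lambda>z. gauss_kernel s (z - a) / real N * sqrt (wt s R z)) \<le> sqrt (Kc s R TYPE('a) / (real N)\<^sup>2)"
    by (rule nw_bound(2)[OF kern_nw[OF a] K0])
  also have "sqrt (Kc s R TYPE('a) / (real N)\<^sup>2) = sqrt (Kc s R TYPE('a)) / real N"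
    by (simp add: real_sqrt_divide)
  finally show "nw (\<lambda>z. gauss_kernel s (z - a) / real N * sqrt (wt s R z)) \<le> sqrt (Kc s R TYPE('a)) / real N" .
qed

lemma QQ_upd:
  assumes k: "k \<in> {1..N}"
  shows "QQ s R N (x(k := v)) z = QQ s R N x z + (gauss_kernel s (z - clampR R v) - gauss_kernel s (z - clampR R (x k))) / real N"
proof -
  let ?h = "\<lambda>u. gauss_kernel s (z - clampR R u)"
  have "(\<Sum>i=1..N. ?h ((x(k := v)) i)) = ?h v + (\<Sum>i\<in>{1..N} - {k}. ?h ((x(k := v)) i))"
    using k by (subst sum.remove[of _ k]) auto
  also have "(\<Sum>i\<in>{1..N} - {k}. ?h ((x(k := v)) i)) = (\<Sum>i\<in>{1..N} - {k}. ?h (x i))"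
    by (intro sum.cong) auto
  also have "\<dots> = (\<Sum>i=1..N. ?h (x i)) - ?h (x k)"
    using k by (subst sum.remove[of "{1..N}" k]) auto
  finally have e: "(\<Sum>i=1..N. ?h ((x(k := v)) i)) = ?h v + ((\<Sum>i=1..N. ?h (x i)) - ?h (x k))" .
  show ?thesis
    unfolding QQ_def e using N by (simp add: field_simps)
qed

lemma Fn_diff:
  assumes k: "k \<in> {1..N}"
  shows "\<bar>Fn (x(k := v)) - Fn x\<bar> \<le> 2 * sqrt (Kc s R TYPE('a)) / real N"
proof -
  define g1 where "g1 z = gauss_kernel s (z - clampR R v) / real N * sqrt (wt s R z)" for z
  define g2 where "g2 z = gauss_kernel s (z - clampR R (x k)) / real N * sqrt (wt s R z)" for z
  define g where "g z = g1 z + - g2 z" for z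
  have [measurable]: "g1 \<in> borel_measurable borel" "g2 \<in> borel_measurable borel" "g \<in> borel_measurable borel"
    unfolding g1_def[abs_def] g2_def[abs_def] g_def[abs_def] by measurable
  have n1: "norm (clampR R v) \<le> R" "norm (clampR R (x k)) \<le> R" using clamp_norm[OF R_nonneg] by auto
  have f1: "(\<integral>\<^sup>+z. ennreal ((g1 z)\<^sup>2) \<partial>lborel) < \<infinity>" and b1: "nw g1 \<le> sqrt (Kc s R TYPE('a)) / real N"
    using kern_nw'[OF n1(1)] by (simp_all add: g1_def[abs_def])
  have f2: "(\<integral>\<^sup>+z. ennreal ((- g2 z)\<^sup>2) \<partial>lborel) < \<infinity>" and b2: "nw (\<lambda>z. - g2 z) \<le> sqrt (Kc s R TYPE('a)) / real N"
    using kern_nw'[OF n1(2)] by (simp_all add: g2_def[abs_def] nw_uminus)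
  have fg: "(\<integral>\<^sup>+z. ennreal ((g z)\<^sup>2) \<partial>lborel) < \<infinity>" and bg: "nw g \<le> 2 * sqrt (Kc s R TYPE('a)) / real N"
  proof -
    have "(\<integral>\<^sup>+z. ennreal ((g1 z + - g2 z)\<^sup>2) \<partial>lborel) < \<infinity>" "nw (\<lambda>z. g1 z + - g2 z) \<le> nw g1 + nw (\<lambda>z. - g2 z)"
      using nw_add[of g1 "\<lambda>z. - g2 z"] f1 f2 by auto
    then show "(\<integral>\<^sup>+z. ennreal ((g z)\<^sup>2) \<partial>lborel) < \<infinity>" "nw g \<le> 2 * sqrt (Kc s R TYPE('a)) / real N"
      using b1 b2 by (simp_all add: g_def[abs_def])
  qed
  have fgm: "(\<integral>\<^sup>+z. ennreal ((- g z)\<^sup>2) \<partial>lborel) < \<infinity>" using fg by simp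
  have upd: "fx (x(k := v)) z = fx x z + g z" for z
    unfolding fx_def QQ_upd[OF k] g_def g1_def g2_def using N by (simp add: field_simps)
  have "Fn (x(k := v)) = nw (\<lambda>z. fx x z + g z)" by (simp add: Fn_def upd[abs_def])
  also have "\<dots> \<le> Fn x + nw g"
    unfolding Fn_def by (rule nw_add(2)) (use fx_fin fg in auto)
  finally have A: "Fn (x(k := v)) \<le> Fn x + nw g" .
  have "Fn x = nw (\<lambda>z. fx (x(k := v)) z + - g z)" by (simp add: Fn_def upd)
  also have "\<dots> \<le> Fn (x(k := v)) + nw (\<lambda>z. - g z)"
    unfolding Fn_def by (rule nw_add(2)) (use fx_fin fgm in auto)
  finally have B: "Fn x \<le> Fn (x(k := v)) + nw g" by (simp add: nw_uminus)
  show ?thesis using A B bg by simp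
qed

lemma Fn_bnd: "Fn x \<le> 2 * sqrt (Kc s R TYPE('a))"
proof -
  define a where "a z = QQ s R N x z * sqrt (wt s R z)" for z
  define b where "b z = - (mix s \<mu> z * sqrt (wt s R z))" for z
  have [measurable]: "a \<in> borel_measurable borel" "b \<in> borel_measurable borel"
    unfolding a_def[abs_def] b_def[abs_def] by measurable
  interpret E: gmix s R "emp N (\<lambda>i. clampR R (x i))" by (rule emp_cl_gmix)
  have K0: "Kc s R TYPE('a) \<ge> 0" using Kc_pos[where 'a='a, of s R] by simp
  have sa: "(\<integral>\<^sup>+z. ennreal ((a z)\<^sup>2) \<partial>lborel) \<le> ennreal (Kc s R TYPE('a))"
    using E.mix_sq wt_pos[OF s_pos, of R]
    by (simp add: a_def QQ_emp[OF N] power_mult_distrib sq_sqrt_wt)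
  have sb: "(\<integral>\<^sup>+z. ennreal ((b z)\<^sup>2) \<partial>lborel) \<le> ennreal (Kc s R TYPE('a))"
    using mix_sq wt_pos[OF s_pos, of R]
    by (simp add: b_def power_mult_distrib sq_sqrt_wt)
  have "Fn x = nw (\<lambda>z. a z + b z)"
    unfolding Fn_def fx_def a_def b_def by (simp add: algebra_simps)
  also have "\<dots> \<le> nw a + nw b"
    by (rule nw_add(2)) (use nw_bound(1)[OF sa K0] nw_bound(1)[OF sb K0] in auto)
  also have "\<dots> \<le> sqrt (Kc s R TYPE('a)) + sqrt (Kc s R TYPE('a))"
    using nw_bound(2)[OF sa K0] nw_bound(2)[OF sb K0] by simp
  finally show ?thesis by simp
qed

lemma Fn_meas: "Fn \<in> borel_measurable (PiM {1..N} (\<lambda>_. \<mu>))"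
proof -
  have eq: "measurable (PiM {1..N} (\<lambda>_. \<mu>) \<Otimes>\<^sub>M lborel) = measurable (PiM {1..N} (\<lambda>_. borel) \<Otimes>\<^sub>M borel)"
    by (intro ext measurable_cong_sets sets_pair_measure_cong sets_PiM_cong) (simp_all add: sets_eq)
  have "(\<lambda>(x, z). ennreal ((fx x z)\<^sup>2)) \<in> borel_measurable (PiM {1..N} (\<lambda>_. borel) \<Otimes>\<^sub>M borel)"
    unfolding fx_def QQ_def by measurable
  then have "(\<lambda>(x, z). ennreal ((fx x z)\<^sup>2)) \<in> borel_measurable (PiM {1..N} (\<lambda>_. \<mu>) \<Otimes>\<^sub>M lborel)"
    unfolding eq .
  then have "(\<lambda>x. \<integral>\<^sup>+z. ennreal ((fx x z)\<^sup>2) \<partial>lborel) \<in> borel_measurable (PiM {1..N} (\<lambda>_. \<mu>))"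
    by (rule lborel.borel_measurable_nn_integral)
  then show ?thesis unfolding Fn_def[abs_def] nw_def by measurable
qed

end


context gmix
begin

lemma mix_le: "mix s \<nu> z \<le> (2 * pi * s\<^sup>2) powr (- real DIM('a) / 2)"
proof -
  interpret N: prob_space \<nu> by (rule prob)
  have "mix s \<nu> z \<le> (\<integral>y. (2 * pi * s\<^sup>2) powr (- real DIM('a) / 2) \<partial>\<nu>)"
    unfolding mix_def
  proof (rule integral_mono[OF gk_int1])
    fix y show "gauss_kernel s (z - y) \<le> (2 * pi * s\<^sup>2) powr (- real DIM('a) / 2)"
      using gk_le[OF s_pos, of "z - y"] by simp
  qed simp
  then show ?thesis by (simp add: N.prob_space)
qed

end

context fset
begin

definition cc :: real where "cc = (2 * pi * s\<^sup>2) powr (- real DIM('a) / 2)"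

definition aa :: "'a \<Rightarrow> 'a \<Rightarrow> real" where
  "aa z v = gauss_kernel s (z - clampR R v) - mix s \<mu> z"

lemma cc_pos: "cc > 0" using s_pos by (simp add: cc_def)

lemma aa_meas[measurable]: "aa z \<in> borel_measurable borel"
  unfolding aa_def[abs_def] by measurable

lemma aa_bnd: "\<bar>aa z v\<bar> \<le> cc"
proof -
  have "0 < gauss_kernel s (z - clampR R v)" "gauss_kernel s (z - clampR R v) \<le> cc"
    using gk_pos[OF s_pos] gk_le[OF s_pos, of "z - clampR R v"] by (simp_all add: cc_def)
  moreover have "0 < mix s \<mu> z" "mix s \<mu> z \<le> cc" using mix_pos mix_le by (simp_all add: cc_def)
  ultimately show ?thesis unfolding aa_def by linarith
qed

interpretation M: prob_space \<mu> by (rule prob)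
interpretation PP: product_prob_space "\<lambda>_::nat. \<mu>" "{1..N}" by unfold_locales
interpretation PM: prob_space "PiM {1..N} (\<lambda>_. \<mu>)" by (rule prob_space_PiM) (rule prob)

lemma aa_mean: "(\<integral>v. aa z v \<partial>\<mu>) = 0"
proof -
  have "(\<integral>v. aa z v \<partial>\<mu>) = (\<integral>v. gauss_kernel s (z - v) - mix s \<mu> z \<partial>\<mu>)"
    using supp by (intro integral_cong_AE) (auto simp: aa_def meas_nu clamp_id elim!: eventually_mono)
  also have "\<dots> = 0"
    using gk_int1 by (simp add: mix_def M.prob_space)
  finally show ?thesis .
qed

lemma gk_sq_int_nu: "integrable \<mu> (\<lambda>v. (gauss_kernel s (z - v))\<^sup>2)"
proof (rule M.integrable_const_bound[where B="cc\<^sup>2"])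
  show "AE v in \<mu>. norm ((gauss_kernel s (z - v))\<^sup>2) \<le> cc\<^sup>2"
  proof (rule AE_I2)
    fix v
    have "0 < gauss_kernel s (z - v)" "gauss_kernel s (z - v) \<le> cc"
      using gk_pos[OF s_pos] gk_le[OF s_pos, of "z - v"] by (simp_all add: cc_def)
    then show "norm ((gauss_kernel s (z - v))\<^sup>2) \<le> cc\<^sup>2" by (simp add: power_mono)
  qed
qed (simp add: meas_nu)

lemma aa_var: "(\<integral>v. (aa z v)\<^sup>2 \<partial>\<mu>) \<le> (\<integral>v. (gauss_kernel s (z - v))\<^sup>2 \<partial>\<mu>)"
proof -
  let ?p = "mix s \<mu> z"
  have "(\<integral>v. (aa z v)\<^sup>2 \<partial>\<mu>) = (\<integral>v. (gauss_kernel s (z - v))\<^sup>2 - 2 * ?p * gauss_kernel s (z - v) + ?p\<^sup>2 \<partial>\<mu>)"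
    using supp by (intro integral_cong_AE)
       (auto simp: aa_def meas_nu clamp_id power2_eq_square algebra_simps elim!: eventually_mono)
  also have "\<dots> = (\<integral>v. (gauss_kernel s (z - v))\<^sup>2 \<partial>\<mu>) - 2 * ?p * ?p + ?p\<^sup>2"
    using gk_int1 gk_sq_int_nu by (simp add: mix_def M.prob_space)
  also have "\<dots> \<le> (\<integral>v. (gauss_kernel s (z - v))\<^sup>2 \<partial>\<mu>)"
    by (simp add: power2_eq_square)
  finally show ?thesis .
qed

definition ff :: "'a \<Rightarrow> nat \<Rightarrow> nat \<Rightarrow> nat \<Rightarrow> 'a \<Rightarrow> real" where
  "ff z i j k v = (if k = i then aa z v else 1) * (if k = j then aa z v else 1)"

lemma ff_int: "integrable \<mu> (ff z i j k)"
proof (rule M.integrable_const_bound[where B="(max cc 1)\<^sup>2"])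
  show "AE v in \<mu>. norm (ff z i j k v) \<le> (max cc 1)\<^sup>2"
  proof (rule AE_I2)
    fix v
    have b: "\<bar>if k = i then aa z v else 1\<bar> \<le> max cc 1" "\<bar>if k = j then aa z v else 1\<bar> \<le> max cc 1"
      using aa_bnd[of z v] by auto
    have "\<bar>ff z i j k v\<bar> \<le> max cc 1 * max cc 1"
      unfolding ff_def abs_mult by (rule mult_mono[OF b]) auto
    then show "norm (ff z i j k v) \<le> (max cc 1)\<^sup>2" by (simp add: power2_eq_square)
  qed
qed (simp add: meas_nu ff_def[abs_def])

lemma cross:
  assumes i: "i \<in> {1..N}" and j: "j \<in> {1..N}"
  shows "(\<integral>x. aa z (x i) * aa z (x j) \<partial>PiM {1..N} (\<lambda>_. \<mu>)) = (if i = j then (\<integral>v. (aa z v)\<^sup>2 \<partial>\<mu>) else 0)"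
proof -
  have eq: "aa z (x i) * aa z (x j) = (\<Prod>k\<in>{1..N}. ff z i j k (x k))" for x
    using i j by (simp add: ff_def prod.distrib)
  have "(\<integral>x. aa z (x i) * aa z (x j) \<partial>PiM {1..N} (\<lambda>_. \<mu>)) = (\<integral>x. (\<Prod>k\<in>{1..N}. ff z i j k (x k)) \<partial>PiM {1..N} (\<lambda>_. \<mu>))"
    by (simp add: eq)
  also have "\<dots> = (\<Prod>k\<in>{1..N}. (\<integral>v. ff z i j k v \<partial>\<mu>))"
    by (rule PP.product_integral_prod) (auto intro: ff_int)
  also have "\<dots> = (if i = j then (\<integral>v. (aa z v)\<^sup>2 \<partial>\<mu>) else 0)"
  proof (cases "i = j")
    case True
    have "(\<integral>v. ff z i j k v \<partial>\<mu>) = (if k = i then (\<integral>v. (aa z v)\<^sup>2 \<partial>\<mu>) else 1)" for k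
      using True by (cases "k = i") (simp_all add: ff_def power2_eq_square M.prob_space)
    then show ?thesis using True i by simp
  next
    case False
    have "(\<integral>v. ff z i j i v \<partial>\<mu>) = 0"
      using False by (simp add: ff_def aa_mean)
    then have "(\<Prod>k\<in>{1..N}. (\<integral>v. ff z i j k v \<partial>\<mu>)) = 0"
      using i by (intro prod_zero) auto
    then show ?thesis using False by simp
  qed
  finally show ?thesis .
qed

lemma aa_prod_int: "integrable (PiM {1..N} (\<lambda>_. \<mu>)) (\<lambda>x. aa z (x i) * aa z (x j))"
  if i: "i \<in> {1..N}" and j: "j \<in> {1..N}" for i j
proof -
  have eq: "(\<lambda>x. aa z (x i) * aa z (x j)) = (\<lambda>x. \<Prod>k\<in>{1..N}. ff z i j k (x k))"
    using i j by (simp add: ff_def prod.distrib)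
  show ?thesis unfolding eq by (rule PP.product_integrable_prod) (auto intro: ff_int)
qed

lemma var_QQ: "(\<integral>x. (QQ s R N x z - mix s \<mu> z)\<^sup>2 \<partial>PiM {1..N} (\<lambda>_. \<mu>))
    \<le> (1 / real N) * (\<integral>v. (gauss_kernel s (z - v))\<^sup>2 \<partial>\<mu>)"
proof -
  let ?PM = "PiM {1..N} (\<lambda>_. \<mu>)"
  have Nr: "real N > 0" using N by simp
  have e1: "QQ s R N x z - mix s \<mu> z = (1 / real N) * (\<Sum>i=1..N. aa z (x i))" for x
    using Nr by (simp add: QQ_def aa_def sum_subtractf field_simps)
  have e2: "(QQ s R N x z - mix s \<mu> z)\<^sup>2 = (1 / real N)\<^sup>2 * (\<Sum>i=1..N. \<Sum>j=1..N. aa z (x i) * aa z (x j))" for x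
    unfolding e1 by (simp add: power_mult_distrib power2_eq_square sum_product)
  have "(\<integral>x. (QQ s R N x z - mix s \<mu> z)\<^sup>2 \<partial>?PM)
      = (1 / real N)\<^sup>2 * (\<Sum>i=1..N. \<Sum>j=1..N. (\<integral>x. aa z (x i) * aa z (x j) \<partial>?PM))"
  proof -
    have int_j: "integrable ?PM (\<lambda>x. \<Sum>j=1..N. aa z (x i) * aa z (x j))" if "i \<in> {1..N}" for i
      using that by (intro Bochner_Integration.integrable_sum aa_prod_int) auto
    have "(\<integral>x. (\<Sum>i=1..N. \<Sum>j=1..N. aa z (x i) * aa z (x j)) \<partial>?PM)
        = (\<Sum>i=1..N. (\<integral>x. (\<Sum>j=1..N. aa z (x i) * aa z (x j)) \<partial>?PM))"
      by (rule Bochner_Integration.integral_sum) (rule int_j)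
    also have "\<dots> = (\<Sum>i=1..N. \<Sum>j=1..N. (\<integral>x. aa z (x i) * aa z (x j) \<partial>?PM))"
      by (intro sum.cong refl Bochner_Integration.integral_sum aa_prod_int) auto
    finally show ?thesis unfolding e2 by simp
  qed
  also have "\<dots> = (1 / real N)\<^sup>2 * (\<Sum>i=1..N. \<Sum>j=1..N. (if i = j then (\<integral>v. (aa z v)\<^sup>2 \<partial>\<mu>) else 0))"
    by (intro arg_cong[where f="\<lambda>t. (1 / real N)\<^sup>2 * t"] sum.cong refl cross) auto
  also have "\<dots> = (1 / real N) * (\<integral>v. (aa z v)\<^sup>2 \<partial>\<mu>)"
    using Nr by (simp add: power2_eq_square)
  also have "\<dots> \<le> (1 / real N) * (\<integral>v. (gauss_kernel s (z - v))\<^sup>2 \<partial>\<mu>)"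
    using aa_var Nr by (intro mult_left_mono) auto
  finally show ?thesis .
qed

end


context fset
begin

interpretation M: prob_space \<mu> by (rule prob)
interpretation PM: prob_space "PiM {1..N} (\<lambda>_. \<mu>)" by (rule prob_space_PiM) (rule prob)
interpretation PS: pair_sigma_finite "PiM {1..N} (\<lambda>_. \<mu>)" lborel by unfold_locales

lemma fx_pair_meas: "(\<lambda>(x, z). ennreal ((fx x z)\<^sup>2)) \<in> borel_measurable (PiM {1..N} (\<lambda>_. \<mu>) \<Otimes>\<^sub>M lborel)"
proof -
  have eq: "measurable (PiM {1..N} (\<lambda>_. \<mu>) \<Otimes>\<^sub>M lborel) = measurable (PiM {1..N} (\<lambda>_. borel) \<Otimes>\<^sub>M borel)"
    by (intro ext measurable_cong_sets sets_pair_measure_cong sets_PiM_cong) (simp_all add: sets_eq)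
  have "(\<lambda>(x, z). ennreal ((fx x z)\<^sup>2)) \<in> borel_measurable (PiM {1..N} (\<lambda>_. borel) \<Otimes>\<^sub>M borel)"
    unfolding fx_def QQ_def by measurable
  then show ?thesis unfolding eq .
qed

lemma sq_int_PM: "integrable (PiM {1..N} (\<lambda>_. \<mu>)) (\<lambda>x. (QQ s R N x z - mix s \<mu> z)\<^sup>2)"
proof -
  have Nr: "real N > 0" using N by simp
  have e1: "QQ s R N x z - mix s \<mu> z = (1 / real N) * (\<Sum>i=1..N. aa z (x i))" for x
    using Nr by (simp add: QQ_def aa_def sum_subtractf field_simps)
  have e2: "(\<lambda>x. (QQ s R N x z - mix s \<mu> z)\<^sup>2) = (\<lambda>x. (1 / real N)\<^sup>2 * (\<Sum>i=1..N. \<Sum>j=1..N. aa z (x i) * aa z (x j)))"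
    unfolding e1 by (simp add: power_mult_distrib power2_eq_square sum_product)
  show ?thesis unfolding e2
    by (intro Bochner_Integration.integrable_mult_right Bochner_Integration.integrable_sum aa_prod_int) auto
qed

lemma EF2: "(\<integral>\<^sup>+x. ennreal ((Fn x)\<^sup>2) \<partial>PiM {1..N} (\<lambda>_. \<mu>)) \<le> ennreal (Kc s R TYPE('a) / real N)"
proof -
  let ?PM = "PiM {1..N} (\<lambda>_. \<mu>)"
  have Nr: "real N > 0" using N by simp
  have "(\<integral>\<^sup>+x. ennreal ((Fn x)\<^sup>2) \<partial>?PM) = (\<integral>\<^sup>+x. (\<integral>\<^sup>+z. ennreal ((fx x z)\<^sup>2) \<partial>lborel) \<partial>?PM)"
  proof (intro nn_integral_cong)
    fix x
    have "(Fn x)\<^sup>2 = enn2real (\<integral>\<^sup>+z. ennreal ((fx x z)\<^sup>2) \<partial>lborel)"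
      by (simp add: Fn_def nw_def)
    then show "ennreal ((Fn x)\<^sup>2) = (\<integral>\<^sup>+z. ennreal ((fx x z)\<^sup>2) \<partial>lborel)"
      using fx_fin[of x] by simp
  qed
  also have "\<dots> = (\<integral>\<^sup>+z. (\<integral>\<^sup>+x. ennreal ((fx x (z::'a))\<^sup>2) \<partial>?PM) \<partial>lborel)"
    by (rule PS.Fubini'[symmetric]) (use fx_pair_meas in simp)
  also have "\<dots> \<le> (\<integral>\<^sup>+z. ennreal (1 / real N) * (\<integral>\<^sup>+v. ennreal ((gauss_kernel s ((z::'a) - v))\<^sup>2 * wt s R z) \<partial>\<mu>) \<partial>lborel)"
  proof (intro nn_integral_mono)
    fix z :: 'a
    have w0: "wt s R z > 0" by (rule wt_pos[OF s_pos])
    have "(\<integral>\<^sup>+x. ennreal ((fx x z)\<^sup>2) \<partial>?PM) = (\<integral>\<^sup>+x. ennreal ((QQ s R N x z - mix s \<mu> z)\<^sup>2) * ennreal (wt s R z) \<partial>?PM)"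
      using w0 by (intro nn_integral_cong) (simp add: fx_sq ennreal_mult)
    also have "\<dots> = (\<integral>\<^sup>+x. ennreal ((QQ s R N x z - mix s \<mu> z)\<^sup>2) \<partial>?PM) * ennreal (wt s R z)"
      by (rule nn_integral_multc) (use sq_int_PM[of z] in auto)
    also have "(\<integral>\<^sup>+x. ennreal ((QQ s R N x z - mix s \<mu> z)\<^sup>2) \<partial>?PM) = ennreal (\<integral>x. (QQ s R N x z - mix s \<mu> z)\<^sup>2 \<partial>?PM)"
      by (rule nn_integral_eq_integral[OF sq_int_PM]) simp
    also have "ennreal (\<integral>x. (QQ s R N x z - mix s \<mu> z)\<^sup>2 \<partial>?PM) \<le> ennreal ((1 / real N) * (\<integral>v. (gauss_kernel s (z - v))\<^sup>2 \<partial>\<mu>))"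
      by (rule ennreal_leI) (rule var_QQ)
    also have "ennreal ((1 / real N) * (\<integral>v. (gauss_kernel s (z - v))\<^sup>2 \<partial>\<mu>)) * ennreal (wt s R z)
        = ennreal (1 / real N) * ((\<integral>\<^sup>+v. ennreal ((gauss_kernel s (z - v))\<^sup>2) \<partial>\<mu>) * ennreal (wt s R z))"
    proof -
      have "ennreal (\<integral>v. (gauss_kernel s (z - v))\<^sup>2 \<partial>\<mu>) = (\<integral>\<^sup>+v. ennreal ((gauss_kernel s (z - v))\<^sup>2) \<partial>\<mu>)"
        by (rule nn_integral_eq_integral[symmetric, OF gk_sq_int_nu]) simp
      moreover have "ennreal ((1 / real N) * (\<integral>v. (gauss_kernel s (z - v))\<^sup>2 \<partial>\<mu>)) = ennreal (1 / real N) * ennreal (\<integral>v. (gauss_kernel s (z - v))\<^sup>2 \<partial>\<mu>)"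
        by (rule ennreal_mult) simp_all
      ultimately show ?thesis by (simp only: mult.assoc)
    qed
    also have "(\<integral>\<^sup>+v. ennreal ((gauss_kernel s (z - v))\<^sup>2) \<partial>\<mu>) * ennreal (wt s R z)
        = (\<integral>\<^sup>+v. ennreal ((gauss_kernel s (z - v))\<^sup>2 * wt s R z) \<partial>\<mu>)"
      using w0 by (subst nn_integral_multc[symmetric]) (simp_all add: meas_nu ennreal_mult)
    finally show "(\<integral>\<^sup>+x. ennreal ((fx x z)\<^sup>2) \<partial>?PM) \<le> ennreal (1 / real N) * (\<integral>\<^sup>+v. ennreal ((gauss_kernel s (z - v))\<^sup>2 * wt s R z) \<partial>\<mu>)"
      by (simp add: mult_right_mono)
  qed
  also have "\<dots> = ennreal (1 / real N) * (\<integral>\<^sup>+z. (\<integral>\<^sup>+v. ennreal ((gauss_kernel s ((z::'a) - v))\<^sup>2 * wt s R z) \<partial>\<mu>) \<partial>lborel)"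
    by (rule nn_integral_cmult) (rule M.borel_measurable_nn_integral, unfold meas_pair, measurable)
  also have "\<dots> \<le> ennreal (1 / real N) * ennreal (Kc s R TYPE('a))"
    by (intro mult_left_mono sq_fubini) simp
  also have "\<dots> = ennreal (Kc s R TYPE('a) / real N)"
    using Kc_pos[where 'a='a, of s R] Nr by (simp add: ennreal_mult[symmetric])
  finally show ?thesis .
qed

lemma Fn_int: "integrable (PiM {1..N} (\<lambda>_. \<mu>)) Fn"
  using Fn_bnd Fn_nonneg Fn_meas by (intro PM.integrable_const_bound[where B="2 * sqrt (Kc s R TYPE('a))"]) auto

lemma Fn2_int: "integrable (PiM {1..N} (\<lambda>_. \<mu>)) (\<lambda>x. (Fn x)\<^sup>2)"
proof (rule PM.integrable_const_bound[where B="(2 * sqrt (Kc s R TYPE('a)))\<^sup>2"])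
  show "AE x in PiM {1..N} (\<lambda>_. \<mu>). norm ((Fn x)\<^sup>2) \<le> (2 * sqrt (Kc s R TYPE('a)))\<^sup>2"
  proof (rule AE_I2)
    fix x
    have "(Fn x)\<^sup>2 \<le> (2 * sqrt (Kc s R TYPE('a)))\<^sup>2" by (rule power_mono[OF Fn_bnd Fn_nonneg])
    then show "norm ((Fn x)\<^sup>2) \<le> (2 * sqrt (Kc s R TYPE('a)))\<^sup>2" by simp
  qed
qed (use Fn_meas in simp)

lemma EF: "(\<integral>x. Fn x \<partial>PiM {1..N} (\<lambda>_. \<mu>)) \<le> sqrt (Kc s R TYPE('a) / real N)"
proof -
  let ?PM = "PiM {1..N} (\<lambda>_. \<mu>)"
  have "0 \<le> PM.variance Fn" by (rule PM.variance_positive)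
  then have "(\<integral>x. Fn x \<partial>?PM)\<^sup>2 \<le> (\<integral>x. (Fn x)\<^sup>2 \<partial>?PM)"
    using PM.variance_eq[OF Fn_int Fn2_int] by linarith
  also have "(\<integral>x. (Fn x)\<^sup>2 \<partial>?PM) = enn2real (\<integral>\<^sup>+x. ennreal ((Fn x)\<^sup>2) \<partial>?PM)"
    by (rule integral_eq_nn_integral) (use Fn_meas in simp_all)
  also have "\<dots> \<le> Kc s R TYPE('a) / real N"
    using EF2 Kc_pos[where 'a='a, of s R] N by (intro enn2real_leI) auto
  finally show ?thesis by (rule real_le_rsqrt)
qed

end


lemma part1:
  fixes \<mu> :: "'a::euclidean_space measure" and P :: "'b measure"
    and X :: "nat \<Rightarrow> 'b \<Rightarrow> 'a" and R \<sigma> :: real and N :: nat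
  assumes mu: "prob_space \<mu>" and mus: "sets \<mu> = sets borel"
    and supp: "AE y in \<mu>. norm y \<le> R"
    and PP: "prob_space P"
    and ind: "prob_space.indep_vars P (\<lambda>_. borel) X {1..N}"
    and dist: "\<forall>i\<in>{1..N}. distr P borel (X i) = \<mu>"
    and sig: "\<sigma> > 0" and N: "N \<ge> 1"
    and d: "0 < \<delta>" "\<delta> < 1"
  shows "measure P {\<omega> \<in> space P. KL_div (mix \<sigma> \<mu>) (\<lambda>x. (1 / real N) * (\<Sum>i=1..N. gauss_kernel \<sigma> (x - X i \<omega>))) \<le>
              ereal (2 powr (real DIM('a) / 2) / real N * exp (17 / 2 * R\<^sup>2 / \<sigma>\<^sup>2)
                     * (1 + sqrt (2 * ln (1 / \<delta>)))\<^sup>2)} \<ge> 1 - \<delta>"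
proof -
  interpret P: prob_space P by (rule PP)
  have Gax: "gmix \<sigma> R \<mu>" by (rule gmix.intro[OF sig mu mus supp])
  interpret G: gmix \<sigma> R \<mu> by (rule Gax)
  interpret F: fset \<sigma> R \<mu> N by (rule fset.intro[OF Gax]) (rule fset_axioms.intro[OF N])
  interpret M: prob_space \<mu> by (rule mu)
  let ?PM = "PiM {1..N} (\<lambda>_. \<mu>)"
  let ?PMb = "PiM {1..N} (\<lambda>_. borel :: 'a measure)"
  interpret PM: prob_space ?PM by (rule prob_space_PiM) (rule mu)
  define K where "K = Kc \<sigma> R TYPE('a)"
  have K0: "K > 0" unfolding K_def by (rule Kc_pos)
  have Nr: "real N > 0" using N by simp
  define L where "L = ln (1 / \<delta>)"
  have L0: "L > 0" using d by (simp add: L_def)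
  define E where "E = (\<integral>x. F.Fn x \<partial>?PM)"
  define t where "t = sqrt (K / real N) * sqrt (2 * L)"
  have t0: "t > 0" using K0 Nr L0 by (simp add: t_def)
  define c where "c = 2 * sqrt K / real N"
  have c0: "c > 0" using K0 Nr by (simp add: c_def)
  define B where "B = 2 powr (real DIM('a) / 2) / real N * exp (17 / 2 * R\<^sup>2 / \<sigma>\<^sup>2) * (1 + sqrt (2 * ln (1 / \<delta>)))\<^sup>2"
  have tail: "measure ?PM {x \<in> space ?PM. F.Fn x \<ge> E + t} \<le> \<delta>"
  proof -
    have "measure ?PM {x \<in> space ?PM. F.Fn x \<ge> E + t} \<le> exp (- 2 * t\<^sup>2 / (real (card {1..N}) * c\<^sup>2))"
      unfolding E_def
    proof (rule mcdiarmid_tail[OF mu _ _ c0 t0 F.Fn_meas])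
      show "finite {1..N}" "{1..N} \<noteq> {}" using N by auto
      show "\<forall>x\<in>space ?PM. \<bar>F.Fn x\<bar> \<le> 2 * sqrt K"
        using F.Fn_bnd F.Fn_nonneg by (simp add: K_def)
      show "\<forall>i\<in>{1..N}. \<forall>x\<in>space ?PM. \<forall>y\<in>space \<mu>. \<bar>F.Fn (x(i := y)) - F.Fn x\<bar> \<le> c"
        using F.Fn_diff by (simp add: c_def K_def)
    qed
    also have "- 2 * t\<^sup>2 / (real (card {1..N}) * c\<^sup>2) = - L"
    proof -
      have t2: "t\<^sup>2 = K / real N * (2 * L)"
        unfolding t_def power_mult_distrib using K0 Nr L0 by simp
      have c2: "c\<^sup>2 = 4 * K / (real N)\<^sup>2"
        unfolding c_def power_divide power_mult_distrib using K0 by simp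
      show ?thesis unfolding t2 c2 using K0 Nr by (simp add: field_simps power2_eq_square)
    qed
    also have "exp (- L) = \<delta>" using d by (simp add: L_def ln_div exp_minus)
    finally show ?thesis .
  qed
  have good: "(F.Fn x)\<^sup>2 \<le> B" if "F.Fn x < E + t" for x
  proof -
    have "E \<le> sqrt (K / real N)" unfolding E_def K_def by (rule F.EF)
    then have "F.Fn x \<le> sqrt (K / real N) * (1 + sqrt (2 * L))"
      using that by (simp add: t_def algebra_simps)
    then have "(F.Fn x)\<^sup>2 \<le> (sqrt (K / real N) * (1 + sqrt (2 * L)))\<^sup>2"
      by (rule power_mono) (rule F.Fn_nonneg)
    also have "\<dots> = K / real N * (1 + sqrt (2 * L))\<^sup>2"
      using K0 Nr by (simp add: power_mult_distrib)
    also have "\<dots> \<le> 2 powr (real DIM('a) / 2) / real N * exp (17 / 2 * R\<^sup>2 / \<sigma>\<^sup>2) * (1 + sqrt (2 * L))\<^sup>2"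
    proof -
      have "6 * R\<^sup>2 / \<sigma>\<^sup>2 \<le> 17 / 2 * R\<^sup>2 / \<sigma>\<^sup>2"
        by (rule divide_right_mono) auto
      then have "exp (6 * R\<^sup>2 / \<sigma>\<^sup>2) \<le> exp (17 / 2 * R\<^sup>2 / \<sigma>\<^sup>2)"
        by (rule exp_mono)
      then have "K \<le> 2 powr (real DIM('a) / 2) * exp (17 / 2 * R\<^sup>2 / \<sigma>\<^sup>2)"
        by (simp add: K_def Kc_def)
      then have "K / real N \<le> 2 powr (real DIM('a) / 2) * exp (17 / 2 * R\<^sup>2 / \<sigma>\<^sup>2) / real N"
        by (rule divide_right_mono) (use Nr in simp)
      then show ?thesis
        by (intro mult_right_mono) simp_all
    qed
    finally show ?thesis by (simp add: B_def L_def)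
  qed
  have Xm[measurable]: "X i \<in> borel_measurable P" if "i \<in> {1..N}" for i
    using ind that unfolding P.indep_vars_def2 by auto
  define Xb where "Xb \<omega> = (\<lambda>i\<in>{1..N}. X i \<omega>)" for \<omega>
  have Xb_meas: "Xb \<in> measurable P ?PMb"
    unfolding Xb_def by (rule measurable_restrict) (rule Xm)
  have distrX: "distr P ?PMb Xb = ?PM"
  proof -
    have "distr P ?PMb Xb = PiM {1..N} (\<lambda>i. distr P borel (X i))"
      using ind unfolding Xb_def by (subst (asm) P.indep_vars_iff_distr_eq_PiM') (use N Xm in auto)
    also have "\<dots> = ?PM" by (rule PiM_cong) (use dist in auto)
    finally show ?thesis .
  qed
  have meq: "measurable ?PMb = measurable ?PM"
    by (intro ext measurable_cong_sets sets_PiM_cong) (simp_all add: mus)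
  have Fn_meas_b[measurable]: "F.Fn \<in> borel_measurable ?PMb"
    unfolding meq by (rule F.Fn_meas)
  have space_eq: "space ?PMb = space ?PM"
    by (rule sets_eq_imp_space_eq) (rule sets_PiM_cong, simp_all add: mus)
  have badP: "measure P {\<omega> \<in> space P. E + t \<le> F.Fn (Xb \<omega>)} \<le> \<delta>"
  proof -
    have Sm: "{x \<in> space ?PMb. E + t \<le> F.Fn x} \<in> sets ?PMb" by measurable
    have "measure P {\<omega> \<in> space P. E + t \<le> F.Fn (Xb \<omega>)} = measure P (Xb -` {x \<in> space ?PMb. E + t \<le> F.Fn x} \<inter> space P)"
      using measurable_space[OF Xb_meas] by (intro arg_cong[where f="measure P"]) auto
    also have "\<dots> = measure (distr P ?PMb Xb) {x \<in> space ?PMb. E + t \<le> F.Fn x}"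
      by (rule measure_distr[OF Xb_meas Sm, symmetric])
    also have "\<dots> = measure ?PM {x \<in> space ?PM. F.Fn x \<ge> E + t}"
      unfolding distrX space_eq by (rule refl)
    also have "\<dots> \<le> \<delta>" by (rule tail)
    finally show ?thesis .
  qed
  define qf where "qf \<omega> = (\<lambda>x. (1 / real N) * (\<Sum>i=1..N. gauss_kernel \<sigma> (x - X i \<omega>)))" for \<omega>
  define I where "I \<omega> = (\<integral>z. mix \<sigma> \<mu> z * ln (mix \<sigma> \<mu> z / qf \<omega> z) \<partial>lborel)" for \<omega>
  have qf_emp: "qf \<omega> = mix \<sigma> (emp N (\<lambda>i. X i \<omega>))" for \<omega>
    by (simp add: qf_def mix_emp[OF N] fun_eq_iff)
  have KLeq: "KL_div (mix \<sigma> \<mu>) (qf \<omega>) = ereal (I \<omega>)" for \<omega>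
  proof -
    define r where "r = R + (\<Sum>i=1..N. norm (X i \<omega>))"
    have Rr: "R \<le> r" by (simp add: r_def sum_nonneg)
    have nr: "\<forall>i\<in>{1..N}. norm (X i \<omega>) \<le> r"
    proof
      fix i assume i: "i \<in> {1..N}"
      have "norm (X i \<omega>) \<le> (\<Sum>i=1..N. norm (X i \<omega>))"
        using i by (intro member_le_sum) auto
      then show "norm (X i \<omega>) \<le> r" using G.r_nonneg by (simp add: r_def)
    qed
    have supp': "AE y in \<mu>. norm y \<le> r" using supp Rr by (auto elim!: eventually_mono)
    have G1: "gmix \<sigma> r \<mu>" by (rule gmix.intro[OF sig mu mus supp'])
    have G2: "gmix \<sigma> r (emp N (\<lambda>i. X i \<omega>))" by (rule emp_gmix[OF sig N nr])
    show ?thesis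
      using kl_bound(1)[OF G1 G2] by (simp add: KL_div_def I_def qf_emp)
  qed
  have Ibound: "I \<omega> \<le> (F.Fn (Xb \<omega>))\<^sup>2" if nX: "\<forall>i\<in>{1..N}. norm (X i \<omega>) \<le> R" for \<omega>
  proof -
    have G2: "gmix \<sigma> R (emp N (\<lambda>i. X i \<omega>))" by (rule emp_gmix[OF sig N nX])
    have "I \<omega> \<le> enn2real (\<integral>\<^sup>+z. ennreal ((mix \<sigma> (emp N (\<lambda>i. X i \<omega>)) z - mix \<sigma> \<mu> z)\<^sup>2 * wt \<sigma> R z) \<partial>lborel)"
      using kl_bound(3)[OF Gax G2] by (simp add: I_def qf_emp)
    also have "\<dots> = enn2real (\<integral>\<^sup>+z. ennreal ((F.fx (Xb \<omega>) z)\<^sup>2) \<partial>lborel)"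
    proof -
      have "QQ \<sigma> R N (Xb \<omega>) z = mix \<sigma> (emp N (\<lambda>i. X i \<omega>)) z" for z
        unfolding QQ_def mix_emp[OF N] using nX
        by (intro arg_cong[where f="\<lambda>u. 1 / real N * u"] sum.cong refl) (simp add: Xb_def clamp_id)
      then show ?thesis by (simp add: F.fx_sq)
    qed
    also have "\<dots> = (F.Fn (Xb \<omega>))\<^sup>2"
      by (simp add: F.Fn_def nw_def)
    finally show ?thesis .
  qed
  have I_meas[measurable]: "I \<in> borel_measurable P"
  proof -
    have "(\<lambda>(\<omega>, z). mix \<sigma> \<mu> z * ln (mix \<sigma> \<mu> z / qf \<omega> z)) \<in> borel_measurable (P \<Otimes>\<^sub>M lborel)"
      unfolding qf_def by measurable
    then show ?thesis unfolding I_def[abs_def] by (rule lborel.borel_measurable_lebesgue_integral)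
  qed
  have AE_good: "AE \<omega> in P. \<forall>i\<in>{1..N}. norm (X i \<omega>) \<le> R"
  proof (rule AE_finite_allI)
    show "finite {1..N}" by simp
    fix i assume i: "i \<in> {1..N}"
    have deq: "distr P borel (X i) = \<mu>" using dist i by blast
    have "AE y in distr P borel (X i). norm y \<le> R" unfolding deq by (rule supp)
    then show "AE \<omega> in P. norm (X i \<omega>) \<le> R"
      by (subst (asm) AE_distr_iff) (use i in auto)
  qed
  define A where "A = {\<omega> \<in> space P. F.Fn (Xb \<omega>) < E + t}"
  define Gd where "Gd = {\<omega> \<in> space P. \<forall>i\<in>{1..N}. norm (X i \<omega>) \<le> R}"
  have Xbm[measurable]: "(\<lambda>\<omega>. F.Fn (Xb \<omega>)) \<in> borel_measurable P"
    using measurable_compose[OF Xb_meas Fn_meas_b] .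
  have A_sets: "A \<in> sets P" unfolding A_def by measurable
  have Gd_sets: "Gd \<in> sets P" unfolding Gd_def by measurable
  have S_sets: "{\<omega> \<in> space P. I \<omega> \<le> B} \<in> sets P" by measurable
  have "measure P A = 1 - measure P {\<omega> \<in> space P. E + t \<le> F.Fn (Xb \<omega>)}"
  proof -
    have "A = space P - {\<omega> \<in> space P. E + t \<le> F.Fn (Xb \<omega>)}" by (auto simp: A_def)
    moreover have "{\<omega> \<in> space P. E + t \<le> F.Fn (Xb \<omega>)} \<in> sets P" by measurable
    ultimately show ?thesis using P.prob_compl by simp
  qed
  then have mA: "measure P A \<ge> 1 - \<delta>" using badP by simp
  have "measure P (A \<inter> Gd) = measure P A"
    by (rule P.finite_measure_eq_AE) (use AE_good A_sets Gd_sets in \<open>auto simp: Gd_def A_def elim!: eventually_mono\<close>)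
  moreover have "A \<inter> Gd \<subseteq> {\<omega> \<in> space P. I \<omega> \<le> B}"
  proof
    fix \<omega> assume w: "\<omega> \<in> A \<inter> Gd"
    then have "I \<omega> \<le> (F.Fn (Xb \<omega>))\<^sup>2" using Ibound by (auto simp: Gd_def)
    also have "\<dots> \<le> B" using w good by (auto simp: A_def B_def L_def)
    finally show "\<omega> \<in> {\<omega> \<in> space P. I \<omega> \<le> B}" using w by (auto simp: A_def)
  qed
  then have "measure P (A \<inter> Gd) \<le> measure P {\<omega> \<in> space P. I \<omega> \<le> B}"
    by (rule P.finite_measure_mono) (rule S_sets)
  ultimately have "measure P {\<omega> \<in> space P. I \<omega> \<le> B} \<ge> 1 - \<delta>" using mA by simp
  moreover have "{\<omega> \<in> space P. KL_div (mix \<sigma> \<mu>) (qf \<omega>) \<le> ereal B} = {\<omega> \<in> space P. I \<omega> \<le> B}"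
    by (simp add: KLeq)
  ultimately show ?thesis by (simp add: qf_def B_def)
qed


theorem theoremF1:
  fixes \<mu> :: "'a::euclidean_space measure" and P :: "'b measure"
    and X :: "nat \<Rightarrow> 'b \<Rightarrow> 'a" and R \<sigma> :: real and N :: nat
  assumes "prob_space \<mu>" and "sets \<mu> = sets borel"
    and "AE y in \<mu>. norm y \<le> R"
    and "prob_space P"
    and "prob_space.indep_vars P (\<lambda>_. borel) X {1..N}"
    and "\<forall>i\<in>{1..N}. distr P borel (X i) = \<mu>"
    and "\<sigma> > 0" and "N \<ge> 1"
  defines "p \<equiv> \<lambda>x. \<integral>y. gauss_kernel \<sigma> (x - y) \<partial>\<mu>"
    and "q \<equiv> \<lambda>\<omega> x. (1 / real N) * (\<Sum>i=1..N. gauss_kernel \<sigma> (x - X i \<omega>))"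
  shows "(\<forall>\<delta>::real. 0 < \<delta> \<and> \<delta> < 1 \<longrightarrow>
            measure P {\<omega> \<in> space P. KL_div p (q \<omega>) \<le>
              ereal (2 powr (real DIM('a) / 2) / real N * exp (17 / 2 * R\<^sup>2 / \<sigma>\<^sup>2)
                     * (1 + sqrt (2 * ln (1 / \<delta>)))\<^sup>2)} \<ge> 1 - \<delta>)
       \<and> (\<forall>a::real. 0 < a \<longrightarrow>
            measure P {\<omega> \<in> space P. KL_div p (q \<omega>) \<le>
              ereal (2 powr (real DIM('a) / 2) / real N * exp (17 / 2 * R\<^sup>2 / \<sigma>\<^sup>2)
                     * (1 + sqrt (2 * a * ln (real N)))\<^sup>2)} \<ge> 1 - real N powr (- a))"
proof -
  have peq: "p = mix \<sigma> \<mu>" unfolding p_def mix_def[abs_def] ..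
  have P1: "measure P {\<omega> \<in> space P. KL_div p (q \<omega>) \<le>
              ereal (2 powr (real DIM('a) / 2) / real N * exp (17 / 2 * R\<^sup>2 / \<sigma>\<^sup>2)
                     * (1 + sqrt (2 * ln (1 / \<delta>)))\<^sup>2)} \<ge> 1 - \<delta>" if "0 < \<delta>" "\<delta> < 1" for \<delta>
    unfolding peq q_def by (rule part1[OF assms(1-8) that])
  show ?thesis
  proof (intro conjI allI impI)
    fix \<delta> :: real assume "0 < \<delta> \<and> \<delta> < 1"
    then show "measure P {\<omega> \<in> space P. KL_div p (q \<omega>) \<le>
              ereal (2 powr (real DIM('a) / 2) / real N * exp (17 / 2 * R\<^sup>2 / \<sigma>\<^sup>2)
                     * (1 + sqrt (2 * ln (1 / \<delta>)))\<^sup>2)} \<ge> 1 - \<delta>" using P1 by auto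
  next
    fix a :: real assume a: "0 < a"
    show "measure P {\<omega> \<in> space P. KL_div p (q \<omega>) \<le>
              ereal (2 powr (real DIM('a) / 2) / real N * exp (17 / 2 * R\<^sup>2 / \<sigma>\<^sup>2)
                     * (1 + sqrt (2 * a * ln (real N)))\<^sup>2)} \<ge> 1 - real N powr (- a)"
    proof (cases "N = 1")
      case True
      then show ?thesis by simp
    next
      case False
      then have N2: "real N > 1" using assms(8) by simp
      define \<delta> where "\<delta> = real N powr (- a)"
      have d0: "0 < \<delta>" using N2 by (simp add: \<delta>_def)
      have d1: "\<delta> < 1" using N2 a by (simp add: \<delta>_def powr_less_one)
      have "ln (1 / \<delta>) = a * ln (real N)"
        using N2 by (simp add: \<delta>_def powr_minus ln_powr divide_inverse)
      then have "2 * ln (1 / \<delta>) = 2 * a * ln (real N)" by simp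
      then show ?thesis using P1[OF d0 d1] unfolding \<delta>_def by (simp add: mult.assoc)
    qed
  qed
qed


end
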